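(* For each $t\in[0,1)$, the operator $C_t: VH(\mathbb D)\to VH(\mathbb D)$ satisfies: (i) $\sigma_{pt}(C_t;VH(\mathbb D))=\{\frac1{m+1}: m\in\mathbb N_0\}$; (ii) $\sigma(C_t;VH(\mathbb D))=\{\frac1{m+1}: m\in\mathbb N_0\}\cup\{0\}$.
   Context: $\mathbb D$ is the open unit disc. Define $v(z)=1$ if $|z|\le 1-1/e$ and $v(z)=(-\log(1-|z|))^{-1}$ if $1-1/e\le|z|<1$, $v_k=v^k$, $H^\infty_{v_k}=\{f \text{ analytic on }\mathbb D:\sup_{z\in\mathbb D}v_k(z)|f(z)|<\infty\}$ normed by this sup, and $VH(\mathbb D)=\bigcup_kH^\infty_{v_k}$ with the finest locally convex topology making all inclusions continuous. For $t\in[0,1]$, $C_tf(z)=\frac1z\int_0^z\frac{f(\zeta)}{1-t\zeta}\,d\zeta$ for $z\neq0$ and $C_tf(0)=f(0)$. For continuous linear $T$ on a locally convex space $X$, $\rho(T;X)$ is the set of $\lambda\in\mathbb C$ such that $\lambda I-T$ has a continuous inverse on $X$, $\sigma(T;X)=\mathbb C\setminus\rho(T;X)$, and $\sigma_{pt}(T;X)$ is the set of $\lambda$ with $\lambda I-T$ not injective. $\mathbb N_0=\{0,1,2,\dots\}$. *)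

theory Defs
  imports "HOL-Complex_Analysis.Complex_Analysis"
begin

definition wv :: "complex \<Rightarrow> real" where
  "wv z = (if norm z \<le> 1 - 1 / exp 1 then 1 else 1 / (- ln (1 - norm z)))"

definition wvk :: "nat \<Rightarrow> complex \<Rightarrow> real" where
  "wvk k z = (wv z) ^ k"

text \<open>Analytic functions on the disc are represented by functions complex => complex
  that vanish outside the open unit disc (so equality of elements = equality on the disc).\<close>
definition Hv :: "nat \<Rightarrow> (complex \<Rightarrow> complex) set" where
  "Hv k = {f. f holomorphic_on ball 0 1 \<and> (\<forall>z. 1 \<le> norm z \<longrightarrow> f z = 0)
             \<and> (\<exists>C. \<forall>z\<in>ball 0 1. wvk k z * norm (f z) \<le> C)}"

definition Hv_norm :: "nat \<Rightarrow> (complex \<Rightarrow> complex) \<Rightarrow> real" where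
  "Hv_norm k f = (SUP z\<in>ball 0 1. wvk k z * norm (f z))"

definition VH :: "(complex \<Rightarrow> complex) set" where
  "VH = (\<Union>k. Hv k)"

text \<open>Continuous seminorms of the finest locally convex topology on VH making all inclusions
  H_{v_k} -> VH continuous: exactly the seminorms on VH whose restriction to each step is
  continuous (bounded by a multiple of the step norm).\<close>
definition VH_cont_seminorm :: "((complex \<Rightarrow> complex) \<Rightarrow> real) \<Rightarrow> bool" where
  "VH_cont_seminorm p \<longleftrightarrow>
     (\<forall>f\<in>VH. 0 \<le> p f) \<and>
     (\<forall>f\<in>VH. \<forall>g\<in>VH. p (\<lambda>z. f z + g z) \<le> p f + p g) \<and>
     (\<forall>c. \<forall>f\<in>VH. p (\<lambda>z. c * f z) = norm c * p f) \<and>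
     (\<forall>k. \<exists>C. \<forall>f\<in>Hv k. p f \<le> C * Hv_norm k f)"

definition VH_linear :: "((complex \<Rightarrow> complex) \<Rightarrow> (complex \<Rightarrow> complex)) \<Rightarrow> bool" where
  "VH_linear T \<longleftrightarrow> (\<forall>f\<in>VH. T f \<in> VH) \<and>
     (\<forall>f\<in>VH. \<forall>g\<in>VH. T (\<lambda>z. f z + g z) = (\<lambda>z. T f z + T g z)) \<and>
     (\<forall>c. \<forall>f\<in>VH. T (\<lambda>z. c * f z) = (\<lambda>z. c * T f z))"

definition VH_cont_op :: "((complex \<Rightarrow> complex) \<Rightarrow> (complex \<Rightarrow> complex)) \<Rightarrow> bool" where
  "VH_cont_op T \<longleftrightarrow> VH_linear T \<and>
     (\<forall>q. VH_cont_seminorm q \<longrightarrow> VH_cont_seminorm (q \<circ> T))"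

definition VH_resolvent :: "((complex \<Rightarrow> complex) \<Rightarrow> (complex \<Rightarrow> complex)) \<Rightarrow> complex set" where
  "VH_resolvent T = {l. \<exists>S. VH_cont_op S \<and>
      (\<forall>f\<in>VH. S (\<lambda>z. l * f z - T f z) = f) \<and>
      (\<forall>f\<in>VH. (\<lambda>z. l * S f z - T (S f) z) = f)}"

definition VH_spectrum :: "((complex \<Rightarrow> complex) \<Rightarrow> (complex \<Rightarrow> complex)) \<Rightarrow> complex set" where
  "VH_spectrum T = UNIV - VH_resolvent T"

definition VH_point_spectrum :: "((complex \<Rightarrow> complex) \<Rightarrow> (complex \<Rightarrow> complex)) \<Rightarrow> complex set" where
  "VH_point_spectrum T = {l. \<exists>f\<in>VH. f \<noteq> (\<lambda>z. 0) \<and> (\<lambda>z. l * f z - T f z) = (\<lambda>z. 0)}"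

definition Ces :: "real \<Rightarrow> (complex \<Rightarrow> complex) \<Rightarrow> (complex \<Rightarrow> complex)" where
  "Ces t f = (\<lambda>z. if z = 0 then f 0
      else if norm z < 1 then (1 / z) * contour_integral (linepath 0 z) (\<lambda>\<zeta>. f \<zeta> / (1 - of_real t * \<zeta>))
      else 0)"

end

theory Submission
  imports Defs
begin

lemma wv_props:
  assumes "norm z < 1"
  shows "0 < wv z" "wv z \<le> 1"
proof -
  have "0 < wv z \<and> wv z \<le> 1"
  proof (cases "norm z \<le> 1 - 1 / exp 1")
    case True thus ?thesis by (auto simp: wv_def)
  next
    case False
    hence "1 - norm z < 1 / exp 1" by linarith
    hence "ln (1 - norm z) < ln (1 / exp 1)" using assms by (intro ln_less_cancel_iff[THEN iffD2]) auto
    hence l: "1 < - ln (1 - norm z)" by (simp add: ln_div)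
    define L where "L = - ln (1 - norm z)"
    have w: "wv z = 1 / L" using False by (simp add: wv_def L_def)
    have "1 < L" using l by (simp add: L_def)
    hence "1 / L \<le> 1" "0 < 1 / L" by auto
    thus ?thesis using w by simp
  qed
  thus "0 < wv z" "wv z \<le> 1" by auto
qed

lemma wv_small: "norm z \<le> 1/2 \<Longrightarrow> wv z = 1"
proof -
  assume "norm z \<le> 1/2"
  moreover have "1 / exp 1 \<le> (1/2::real)" using exp_ge_add_one_self[of 1] by (simp add: field_simps)
  ultimately have "norm z \<le> 1 - 1 / exp 1" by linarith
  thus ?thesis by (auto simp: wv_def)
qed

lemma wv_mono:
  assumes "norm z \<le> norm w" "norm w < 1"
  shows "wv w \<le> wv z"
proof -
  have zl: "norm z < 1" using assms by simp
  show ?thesis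
  proof (cases "norm w \<le> 1 - 1 / exp 1")
    case True thus ?thesis using assms by (auto simp: wv_def)
  next
    case wF: False
    show ?thesis
    proof (cases "norm z \<le> 1 - 1 / exp 1")
      case True thus ?thesis using wv_props[OF zl] wv_props[OF assms(2)] by (simp add: wv_def)
    next
      case False
      hence "1 - norm z < 1 / exp 1" by linarith
      hence "ln (1 - norm z) < ln (1 / exp 1)" using zl by (intro ln_less_cancel_iff[THEN iffD2]) auto
      hence p: "1 < - ln (1 - norm z)" by (simp add: ln_div)
      have "ln (1 - norm w) \<le> ln (1 - norm z)" using assms by (subst ln_le_cancel_iff) auto
      hence "- ln (1 - norm z) \<le> - ln (1 - norm w)" by simp
      hence "1 / (- ln (1 - norm w)) \<le> 1 / (- ln (1 - norm z))" using p by (intro frac_le) auto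
      thus ?thesis using False wF by (simp add: wv_def)
    qed
  qed
qed

lemma wvk_props:
  assumes "norm z < 1"
  shows "0 < wvk k z" "wvk k z \<le> 1"
  using wv_props[OF assms] by (auto simp: wvk_def power_le_one)

lemma wvk_small: "norm z \<le> 1/2 \<Longrightarrow> wvk k z = 1"
  by (simp add: wvk_def wv_small)

lemma wvk_mono:
  assumes "norm z \<le> norm w" "norm w < 1"
  shows "wvk k w \<le> wvk k z"
  unfolding wvk_def using wv_mono[OF assms] wv_props[OF assms(2)] by (intro power_mono) auto

lemma wvk_mono_k:
  assumes "norm z < 1" "k \<le> k'"
  shows "wvk k' z \<le> wvk k z"
  unfolding wvk_def using wv_props[OF assms(1)] assms(2) by (intro power_decreasing) auto

lemma HvD:
  assumes "f \<in> Hv k"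
  shows "f holomorphic_on ball 0 1" "\<And>z. 1 \<le> norm z \<Longrightarrow> f z = 0"
    "\<exists>C. \<forall>z\<in>ball 0 1. wvk k z * norm (f z) \<le> C"
  using assms by (auto simp: Hv_def)

lemma Hv_bdd: "f \<in> Hv k \<Longrightarrow> bdd_above ((\<lambda>z. wvk k z * norm (f z)) ` ball 0 1)"
  unfolding bdd_above_def Hv_def by auto

lemma Hv_normD:
  assumes "f \<in> Hv k" "z \<in> ball 0 1"
  shows "wvk k z * norm (f z) \<le> Hv_norm k f"
  unfolding Hv_norm_def using Hv_bdd[OF assms(1)] assms(2) by (rule cSUP_upper2) auto

lemma Hv_norm_le:
  assumes "\<And>z. z \<in> ball 0 1 \<Longrightarrow> wvk k z * norm (f z) \<le> M"
  shows "Hv_norm k f \<le> M"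
  unfolding Hv_norm_def using assms by (intro cSUP_least) auto

lemma Hv_norm_nonneg: assumes "f \<in> Hv k" shows "0 \<le> Hv_norm k f"
proof -
  have "0 \<le> wvk k 0 * norm (f 0)" using wvk_props[of 0 k] by simp
  also have "\<dots> \<le> Hv_norm k f" using Hv_normD[OF assms, of 0] by simp
  finally show ?thesis .
qed

lemma HvI:
  assumes "f holomorphic_on ball 0 1" "\<And>z. 1 \<le> norm z \<Longrightarrow> f z = 0"
    "\<And>z. z \<in> ball 0 1 \<Longrightarrow> wvk k z * norm (f z) \<le> C"
  shows "f \<in> Hv k"
  using assms unfolding Hv_def by (auto intro!: exI[of _ C])

lemma Hv_mono: "k \<le> k' \<Longrightarrow> Hv k \<subseteq> Hv k'"
proof
  fix f assume kk: "k \<le> k'" and f: "f \<in> Hv k"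
  obtain C where C: "\<forall>z\<in>ball 0 1. wvk k z * norm (f z) \<le> C" using HvD(3)[OF f] by auto
  show "f \<in> Hv k'"
  proof (rule HvI[OF HvD(1,2)[OF f]])
    fix z :: complex assume z: "z \<in> ball 0 1"
    have "wvk k' z * norm (f z) \<le> wvk k z * norm (f z)"
      using wvk_mono_k[OF _ kk, of z] z by (intro mult_right_mono) auto
    thus "wvk k' z * norm (f z) \<le> C" using C z by (meson order_trans)
  qed auto
qed

lemma VH_iff: "f \<in> VH \<longleftrightarrow> (\<exists>k. f \<in> Hv k)" by (auto simp: VH_def)

lemma Hv_add: assumes "f \<in> Hv k" "g \<in> Hv k" shows "(\<lambda>z. f z + g z) \<in> Hv k"
proof -
  obtain C where C: "\<forall>z\<in>ball 0 1. wvk k z * norm (f z) \<le> C" using HvD(3)[OF assms(1)] by auto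
  obtain D where D: "\<forall>z\<in>ball 0 1. wvk k z * norm (g z) \<le> D" using HvD(3)[OF assms(2)] by auto
  show ?thesis
  proof (rule HvI)
    show "(\<lambda>z. f z + g z) holomorphic_on ball 0 1" using HvD(1)[OF assms(1)] HvD(1)[OF assms(2)] by (intro holomorphic_intros)
    fix z :: complex assume z: "z \<in> ball 0 1"
    have "wvk k z * norm (f z + g z) \<le> wvk k z * norm (f z) + wvk k z * norm (g z)"
      using wvk_props[of z k] z by (simp add: distrib_left[symmetric] mult_left_mono norm_triangle_ineq)
    thus "wvk k z * norm (f z + g z) \<le> C + D" using C D z by fastforce
  qed (use HvD(2)[OF assms(1)] HvD(2)[OF assms(2)] in auto)
qed

lemma Hv_cmult: assumes "f \<in> Hv k" shows "(\<lambda>z. c * f z) \<in> Hv k"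
proof -
  obtain C where C: "\<forall>z\<in>ball 0 1. wvk k z * norm (f z) \<le> C" using HvD(3)[OF assms(1)] by auto
  show ?thesis
  proof (rule HvI)
    show "(\<lambda>z. c * f z) holomorphic_on ball 0 1" using HvD(1)[OF assms(1)] by (intro holomorphic_intros)
    fix z :: complex assume z: "z \<in> ball 0 1"
    have "wvk k z * norm (c * f z) = norm c * (wvk k z * norm (f z))" by (simp add: norm_mult)
    also have "\<dots> \<le> norm c * C" using C z by (intro mult_left_mono) auto
    finally show "wvk k z * norm (c * f z) \<le> norm c * C" .
  qed (use HvD(2)[OF assms(1)] in auto)
qed

lemma VH_add: "f \<in> VH \<Longrightarrow> g \<in> VH \<Longrightarrow> (\<lambda>z. f z + g z) \<in> VH"
proof -
  assume "f \<in> VH" "g \<in> VH"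
  then obtain k1 k2 where "f \<in> Hv k1" "g \<in> Hv k2" by (auto simp: VH_iff)
  hence "f \<in> Hv (max k1 k2)" "g \<in> Hv (max k1 k2)" using Hv_mono[of k1 "max k1 k2"] Hv_mono[of k2 "max k1 k2"] by auto
  thus ?thesis using Hv_add VH_iff by blast
qed

lemma VH_cmult: "f \<in> VH \<Longrightarrow> (\<lambda>z. c * f z) \<in> VH"
  using Hv_cmult VH_iff by blast

lemma VH_diff: "f \<in> VH \<Longrightarrow> g \<in> VH \<Longrightarrow> (\<lambda>z. f z - g z) \<in> VH"
  using VH_add[of f "\<lambda>z. (-1) * g z"] VH_cmult[of g "-1"] by simp

lemma VH_hol: "f \<in> VH \<Longrightarrow> f holomorphic_on ball 0 1"
  using HvD VH_iff by blast

lemma VH_out: "f \<in> VH \<Longrightarrow> 1 \<le> norm z \<Longrightarrow> f z = 0"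
  using HvD VH_iff by blast

lemma VH_zero_iff: assumes "f \<in> VH" shows "f = (\<lambda>z. 0) \<longleftrightarrow> (\<forall>z\<in>ball 0 1. f z = 0)"
  using VH_out[OF assms] by (auto simp: fun_eq_iff not_less)

lemma cont_opI:
  assumes lin: "VH_linear T"
    and bd: "\<And>k. \<exists>C. \<forall>f\<in>Hv k. T f \<in> Hv k \<and> Hv_norm k (T f) \<le> C * Hv_norm k f"
  shows "VH_cont_op T"
  unfolding VH_cont_op_def
proof (intro conjI allI impI)
  show "VH_linear T" by fact
  fix q assume q: "VH_cont_seminorm q"
  have TV: "\<And>f. f \<in> VH \<Longrightarrow> T f \<in> VH" using lin by (auto simp: VH_linear_def)
  show "VH_cont_seminorm (q \<circ> T)"
    unfolding VH_cont_seminorm_def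
  proof (intro conjI ballI allI)
    fix f assume "f \<in> VH" thus "0 \<le> (q \<circ> T) f" using q TV by (auto simp: VH_cont_seminorm_def)
  next
    fix f g assume f: "f \<in> VH" and g: "g \<in> VH"
    have "(q \<circ> T) (\<lambda>z. f z + g z) = q (\<lambda>z. T f z + T g z)" using lin f g by (auto simp: VH_linear_def)
    also have "\<dots> \<le> q (T f) + q (T g)" using q TV[OF f] TV[OF g] by (auto simp: VH_cont_seminorm_def)
    finally show "(q \<circ> T) (\<lambda>z. f z + g z) \<le> (q \<circ> T) f + (q \<circ> T) g" by simp
  next
    fix c f assume f: "f \<in> VH"
    have "(q \<circ> T) (\<lambda>z. c * f z) = q (\<lambda>z. c * T f z)" using lin f by (auto simp: VH_linear_def)
    also have "\<dots> = norm c * q (T f)" using q TV[OF f] by (auto simp: VH_cont_seminorm_def)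
    finally show "(q \<circ> T) (\<lambda>z. c * f z) = norm c * (q \<circ> T) f" by simp
  next
    fix k
    obtain C1 where C1: "\<forall>f\<in>Hv k. q f \<le> C1 * Hv_norm k f" using q unfolding VH_cont_seminorm_def by blast
    obtain C2 where C2: "\<forall>f\<in>Hv k. T f \<in> Hv k \<and> Hv_norm k (T f) \<le> C2 * Hv_norm k f" using bd by blast
    show "\<exists>C. \<forall>f\<in>Hv k. (q \<circ> T) f \<le> C * Hv_norm k f"
    proof (intro exI ballI)
      fix f assume f: "f \<in> Hv k"
      have Tf: "T f \<in> Hv k" "Hv_norm k (T f) \<le> C2 * Hv_norm k f" using C2 f by auto
      have n1: "0 \<le> Hv_norm k (T f)" "0 \<le> Hv_norm k f" using Hv_norm_nonneg Tf f by auto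
      have "q (T f) \<le> C1 * Hv_norm k (T f)" using C1 Tf by auto
      also have "\<dots> \<le> max C1 0 * Hv_norm k (T f)" using n1 by (intro mult_right_mono) auto
      also have "\<dots> \<le> max C1 0 * (max C2 0 * Hv_norm k f)"
        using Tf n1 by (intro mult_left_mono) (auto intro: order_trans[OF _ mult_right_mono[of C2 "max C2 0"]])
      finally show "(q \<circ> T) f \<le> (max C1 0 * max C2 0) * Hv_norm k f" by (simp add: mult.assoc)
    qed
  qed
qed

lemma den_props:
  assumes "0 \<le> t" "t < 1" "norm z < 1"
  shows "0 < Re (1 - of_real t * z)" "1 - t \<le> norm (1 - of_real t * z)"
    "1 - of_real t * z \<noteq> 0" "1 - of_real t * z \<notin> \<real>\<^sub>\<le>\<^sub>0" "norm (1 - of_real t * z) \<le> 2"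
proof -
  have "\<bar>Re z\<bar> \<le> norm z" by (rule abs_Re_le_cmod)
  hence "t * Re z \<le> t * norm z" using assms by (intro mult_left_mono) auto
  also have "t * norm z \<le> t" using assms by (intro mult_left_le) auto
  finally show r: "0 < Re (1 - of_real t * z)" using assms by simp
  have "norm (of_real t * z) = t * norm z" using assms by (simp add: norm_mult)
  hence "norm (of_real t * z) \<le> t" using assms by (simp add: mult_left_le)
  moreover have "1 - norm (of_real t * z) \<le> norm (1 - of_real t * z)"
    using norm_triangle_ineq2[of 1 "of_real t * z"] by simp
  ultimately show "1 - t \<le> norm (1 - of_real t * z)" by simp
  show "1 - of_real t * z \<noteq> 0"
  proof
    assume "1 - of_real t * z = 0" with r show False by simp
  qed
  show "1 - of_real t * z \<notin> \<real>\<^sub>\<le>\<^sub>0" using r by (auto simp: complex_nonpos_Reals_iff)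
  have "norm (1 - of_real t * z) \<le> 1 + norm (of_real t * z)" using norm_triangle_ineq4[of 1 "of_real t * z"] by simp
  thus "norm (1 - of_real t * z) \<le> 2" using \<open>norm (of_real t * z) \<le> t\<close> assms by simp
qed

lemma ball_prim:
  assumes "g holomorphic_on ball 0 1"
  obtains G where "\<And>x. x \<in> ball 0 1 \<Longrightarrow> (G has_field_derivative g x) (at x)"
proof -
  obtain G where "\<And>x. x \<in> ball 0 1 \<Longrightarrow> (G has_field_derivative g x) (at x within ball 0 1)"
    using holomorphic_convex_primitive'[OF convex_ball open_ball assms] by blast
  thus ?thesis using that at_within_open[OF _ open_ball] by metis
qed

lemma seg_norm: "x \<in> closed_segment 0 z \<Longrightarrow> norm x \<le> norm (z::complex)"
  by (auto simp: closed_segment_def norm_mult intro!: mult_left_le_one_le)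

lemma seg_ball: "z \<in> ball 0 1 \<Longrightarrow> closed_segment 0 z \<subseteq> ball (0::complex) 1"
  using seg_norm by fastforce

lemma ci_prim:
  assumes "\<And>x. x \<in> ball 0 1 \<Longrightarrow> (G has_field_derivative g x) (at x)" "z \<in> ball 0 1"
  shows "(g has_contour_integral (G z - G 0)) (linepath 0 z)"
    "contour_integral (linepath 0 z) g = G z - G 0"
proof -
  show "(g has_contour_integral (G z - G 0)) (linepath 0 z)"
    using contour_integral_primitive[of "ball 0 1" G g "linepath 0 z"] assms seg_ball[OF assms(2)]
    by (auto intro: has_field_derivative_at_within)
  thus "contour_integral (linepath 0 z) g = G z - G 0" by (rule contour_integral_unique)
qed

lemma Ces_eq:
  assumes "\<And>x. x \<in> ball 0 1 \<Longrightarrow> (G has_field_derivative f x / (1 - of_real t * x)) (at x)"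
    "z \<in> ball 0 1" "z \<noteq> 0"
  shows "Ces t f z = (G z - G 0) / z"
  using ci_prim(2)[OF assms(1,2)] assms(2,3) by (simp add: Ces_def)

lemma Ces_prim:
  assumes "0 \<le> t" "t < 1" "f holomorphic_on ball 0 1"
  obtains G where "\<And>x. x \<in> ball 0 1 \<Longrightarrow> (G has_field_derivative f x / (1 - of_real t * x)) (at x)"
proof -
  have "(\<lambda>x. f x / (1 - of_real t * x)) holomorphic_on ball 0 1"
    using assms den_props(3)[OF assms(1,2)] by (intro holomorphic_intros) auto
  thus ?thesis using ball_prim that by blast
qed

lemma Ces_hol:
  assumes "0 \<le> t" "t < 1" "f holomorphic_on ball 0 1"
  shows "Ces t f holomorphic_on ball 0 1"
proof -
  obtain G where G: "\<And>x. x \<in> ball 0 1 \<Longrightarrow> (G has_field_derivative f x / (1 - of_real t * x)) (at x)"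
    using Ces_prim[OF assms] by blast
  have Gh: "G holomorphic_on ball 0 1"
    using G by (metis holomorphic_on_open open_ball)
  have P: "(\<lambda>z. if z = 0 then deriv G 0 else (G z - G 0) / (z - 0)) holomorphic_on ball 0 1"
    by (rule pole_lemma[OF Gh]) auto
  have "deriv G 0 = f 0" using DERIV_imp_deriv[OF G[of 0]] by simp
  hence "\<And>z. z \<in> ball 0 1 \<Longrightarrow> (\<lambda>z. if z = 0 then deriv G 0 else (G z - G 0) / (z - 0)) z = Ces t f z"
    using Ces_eq[OF G] by (auto simp: Ces_def)
  thus ?thesis using holomorphic_transform[OF P] by blast
qed

lemma Ces_out: "1 \<le> norm z \<Longrightarrow> Ces t f z = 0"
  by (auto simp: Ces_def)

lemma Ces_0: "Ces t f 0 = f 0" by (simp add: Ces_def)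

lemma Ces_bound:
  assumes "0 \<le> t" "t < 1" "f \<in> Hv k" "z \<in> ball 0 1"
  shows "wvk k z * norm (Ces t f z) \<le> Hv_norm k f / (1 - t)"
proof -
  define N where "N = Hv_norm k f"
  have N0: "0 \<le> N" using Hv_norm_nonneg[OF assms(3)] by (simp add: N_def)
  have wz: "0 < wvk k z" "wvk k z \<le> 1" using wvk_props assms(4) by auto
  show ?thesis
  proof (cases "z = 0")
    case True
    have "wvk k z * norm (Ces t f z) \<le> N" using Hv_normD[OF assms(3,4)] True by (simp add: Ces_0 N_def)
    also have "N \<le> N / (1 - t)" using N0 assms by (simp add: le_divide_eq mult_left_le)
    finally show ?thesis by (simp add: N_def)
  next
    case False
    obtain G where G: "\<And>x. x \<in> ball 0 1 \<Longrightarrow> (G has_field_derivative f x / (1 - of_real t * x)) (at x)"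
      using Ces_prim[OF assms(1,2) HvD(1)[OF assms(3)]] by blast
    define B where "B = N / (wvk k z * (1 - t))"
    have B0: "0 \<le> B" using N0 wz assms by (simp add: B_def)
    have "norm (G z - G 0) \<le> B * norm (z - 0)"
    proof (rule has_contour_integral_bound_linepath[OF ci_prim(1)[OF G assms(4)] B0])
      fix x assume x: "x \<in> closed_segment 0 z"
      have xb: "x \<in> ball 0 1" using seg_ball[OF assms(4)] x by auto
      have wx: "wvk k z \<le> wvk k x" using wvk_mono[of x z k] seg_norm[OF x] assms(4) by auto
      have "wvk k z * norm (f x) \<le> wvk k x * norm (f x)" using wx by (intro mult_right_mono) auto
      also have "\<dots> \<le> N" using Hv_normD[OF assms(3) xb] by (simp add: N_def)
      finally have fx: "norm (f x) \<le> N / wvk k z" using wz by (simp add: le_divide_eq mult.commute)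
      have dx: "1 - t \<le> norm (1 - of_real t * x)" using den_props(2)[OF assms(1,2)] xb by auto
      have "norm (f x / (1 - of_real t * x)) = norm (f x) / norm (1 - of_real t * x)" by (simp add: norm_divide)
      also have "\<dots> \<le> norm (f x) / (1 - t)" using dx assms by (intro divide_left_mono mult_pos_pos) auto
      also have "\<dots> \<le> (N / wvk k z) / (1 - t)" using fx assms by (intro divide_right_mono) auto
      finally show "norm (f x / (1 - of_real t * x)) \<le> B" by (simp add: B_def)
    qed
    hence "norm (Ces t f z) \<le> B" using Ces_eq[OF G assms(4) False] False by (simp add: norm_divide divide_le_eq)
    hence "wvk k z * norm (Ces t f z) \<le> wvk k z * B" using wz by (intro mult_left_mono) auto
    also have "\<dots> = N / (1 - t)" using wz by (simp add: B_def)
    finally show ?thesis by (simp add: N_def)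
  qed
qed

lemma Ces_Hv:
  assumes "0 \<le> t" "t < 1" "f \<in> Hv k"
  shows "Ces t f \<in> Hv k" "Hv_norm k (Ces t f) \<le> (1 / (1 - t)) * Hv_norm k f"
proof -
  show "Ces t f \<in> Hv k"
    by (rule HvI[OF Ces_hol[OF assms(1,2) HvD(1)[OF assms(3)]] Ces_out Ces_bound[OF assms]])
  show "Hv_norm k (Ces t f) \<le> (1 / (1 - t)) * Hv_norm k f"
    using Ces_bound[OF assms] by (intro Hv_norm_le) simp
qed

lemma Ces_add:
  assumes "0 \<le> t" "t < 1" "f holomorphic_on ball 0 1" "g holomorphic_on ball 0 1"
  shows "Ces t (\<lambda>z. f z + g z) = (\<lambda>z. Ces t f z + Ces t g z)"
proof
  fix z
  obtain F where F: "\<And>x. x \<in> ball 0 1 \<Longrightarrow> (F has_field_derivative f x / (1 - of_real t * x)) (at x)"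
    using Ces_prim[OF assms(1,2,3)] by blast
  obtain G where G: "\<And>x. x \<in> ball 0 1 \<Longrightarrow> (G has_field_derivative g x / (1 - of_real t * x)) (at x)"
    using Ces_prim[OF assms(1,2,4)] by blast
  have FG: "\<And>x. x \<in> ball 0 1 \<Longrightarrow> ((\<lambda>x. F x + G x) has_field_derivative (f x + g x) / (1 - of_real t * x)) (at x)"
    using F G by (auto intro!: derivative_eq_intros simp: add_divide_distrib)
  show "Ces t (\<lambda>z. f z + g z) z = Ces t f z + Ces t g z"
  proof (cases "z \<in> ball 0 1 \<and> z \<noteq> 0")
    case True
    thus ?thesis using Ces_eq[OF FG] Ces_eq[OF F] Ces_eq[OF G] by (simp add: diff_divide_distrib add_divide_distrib)
  next
    case False thus ?thesis by (auto simp: Ces_def)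
  qed
qed

lemma Ces_cmult:
  assumes "0 \<le> t" "t < 1" "f holomorphic_on ball 0 1"
  shows "Ces t (\<lambda>z. c * f z) = (\<lambda>z. c * Ces t f z)"
proof
  fix z
  obtain F where F: "\<And>x. x \<in> ball 0 1 \<Longrightarrow> (F has_field_derivative f x / (1 - of_real t * x)) (at x)"
    using Ces_prim[OF assms(1,2,3)] by blast
  have FG: "\<And>x. x \<in> ball 0 1 \<Longrightarrow> ((\<lambda>x. c * F x) has_field_derivative (c * f x) / (1 - of_real t * x)) (at x)"
    using F by (auto intro!: derivative_eq_intros)
  show "Ces t (\<lambda>z. c * f z) z = c * Ces t f z"
  proof (cases "z \<in> ball 0 1 \<and> z \<noteq> 0")
    case True
    thus ?thesis using Ces_eq[OF FG] Ces_eq[OF F] by (simp add: right_diff_distrib)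
  next
    case False thus ?thesis by (auto simp: Ces_def)
  qed
qed

lemma Ces_VH: assumes "0 \<le> t" "t < 1" "f \<in> VH" shows "Ces t f \<in> VH"
  using Ces_Hv(1)[OF assms(1,2)] assms(3) by (auto simp: VH_iff)

lemma Ces_linear: assumes "0 \<le> t" "t < 1" shows "VH_linear (Ces t)"
  unfolding VH_linear_def using Ces_VH[OF assms] Ces_add[OF assms] Ces_cmult[OF assms] VH_hol by auto

lemma Ces_cont: assumes "0 \<le> t" "t < 1" shows "VH_cont_op (Ces t)"
  by (rule cont_opI[OF Ces_linear[OF assms]]) (use Ces_Hv[OF assms] in blast)

lemma factor0:
  assumes "f holomorphic_on ball 0 1" "\<exists>z\<in>ball 0 1. f z \<noteq> 0"
  obtains m r G where "0 < r" "ball (0::complex) r \<subseteq> ball 0 1" "G holomorphic_on ball 0 r" "G 0 \<noteq> 0"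
    "\<And>z. z \<in> ball 0 r \<Longrightarrow> f z = z^m * G z"
proof (cases "f 0 = 0")
  case False
  show ?thesis by (rule that[where m=0 and r=1 and G=f]) (use assms False in auto)
next
  case True
  have nc: "\<not> f constant_on ball 0 1"
  proof
    assume "f constant_on ball 0 1"
    then obtain y where "\<forall>x\<in>ball 0 1. f x = y" by (auto simp: constant_on_def)
    moreover have "(0::complex) \<in> ball 0 1" by simp
    ultimately have "\<forall>x\<in>ball 0 1. f x = 0" using True by auto
    with assms(2) show False by blast
  qed
  have c: "(0::complex) \<in> ball 0 1" by simp
  show ?thesis
  proof (rule holomorphic_factor_zero_nonconstant[OF assms(1) open_ball connected_ball c True nc])
    fix g r n
    assume *: "0 < n" "0 < r" "ball (0::complex) r \<subseteq> ball 0 1" "g holomorphic_on ball 0 r"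
      "\<And>w. w \<in> ball 0 r \<Longrightarrow> f w = (w - 0)^n * g w" "\<And>w. w \<in> ball 0 r \<Longrightarrow> g w \<noteq> 0"
    have f: "\<And>w. w \<in> ball 0 r \<Longrightarrow> f w = w^n * g w" using *(5) by simp
    have g0: "g 0 \<noteq> 0" using *(2,6) by simp
    show ?thesis using that[OF *(2) *(3) *(4) g0 f] .
  qed
qed

lemma vanish0:
  assumes "0 < r" "\<And>z. z \<in> ball 0 r \<Longrightarrow> z^m * Q z = 0" "continuous_on (ball 0 r) Q"
  shows "Q (0::complex) = 0"
proof -
  have "isCont Q 0" using assms(1,3) continuous_on_eq_continuous_at[OF open_ball, of 0 r Q] by simp
  hence l1: "(Q \<longlongrightarrow> Q 0) (at 0)" by (simp add: isCont_def)
  have "eventually (\<lambda>z. Q z = 0) (at 0)"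
    unfolding eventually_at using assms(1,2) by (intro exI[of _ r]) (auto simp: dist_norm)
  hence "(Q \<longlongrightarrow> 0) (at 0)" by (rule tendsto_eventually)
  thus ?thesis using l1 tendsto_unique[OF at_neq_bot] by metis
qed

lemma deriv_zero_open:
  assumes "\<And>z. z \<in> ball 0 1 \<Longrightarrow> P z = (0::complex)" "(P has_field_derivative D) (at z)" "z \<in> ball 0 1"
  shows "D = 0"
proof -
  have "(P has_field_derivative 0) (at z)"
    by (rule has_field_derivative_transform_within_open[of "\<lambda>z. 0" 0 z "ball 0 1"]) (use assms in auto)
  thus ?thesis using DERIV_unique assms(2) by blast
qed

lemma eigen_class:
  assumes "0 \<le> t" "t < 1" "f holomorphic_on ball 0 1" "\<exists>z\<in>ball 0 1. f z \<noteq> 0"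
    "\<And>z. z \<in> ball 0 1 \<Longrightarrow> l * f z = Ces t f z"
  shows "\<exists>m. l = 1 / of_nat (m+1)"
proof -
  obtain G where G: "\<And>x. x \<in> ball 0 1 \<Longrightarrow> (G has_field_derivative f x / (1 - of_real t * x)) (at x)"
    using Ces_prim[OF assms(1,2,3)] by blast
  have E: "l * z * f z - (G z - G 0) = 0" if "z \<in> ball 0 1" for z
  proof (cases "z = 0")
    case False
    have "l * z * f z = z * (l * f z)" by (simp add: mult.commute mult.left_commute)
    also have "\<dots> = z * Ces t f z" using assms(5)[OF that] by simp
    also have "\<dots> = G z - G 0" using Ces_eq[OF G that False] False by simp
    finally show ?thesis by simp
  qed simp
  have fd: "(f has_field_derivative deriv f z) (at z)" if "z \<in> ball 0 1" for z
    using holomorphic_on_imp_differentiable_at[OF assms(3) open_ball that]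
    by (simp add: DERIV_deriv_iff_field_differentiable)
  have star: "l * (f z + z * deriv f z) = f z / (1 - of_real t * z)" if z: "z \<in> ball 0 1" for z
  proof -
    have "((\<lambda>z. l * z * f z - (G z - G 0)) has_field_derivative
           l * (f z + z * deriv f z) - f z / (1 - of_real t * z)) (at z)"
      using fd[OF z] G[OF z] by (auto intro!: derivative_eq_intros simp: algebra_simps)
    from deriv_zero_open[OF E this z] show ?thesis by simp
  qed
  obtain m r g where r: "0 < r" "ball (0::complex) r \<subseteq> ball 0 1" and gh: "g holomorphic_on ball 0 r" and g0: "g 0 \<noteq> 0"
    and fg: "\<And>z. z \<in> ball 0 r \<Longrightarrow> f z = z^m * g z"
  proof (rule factor0[OF assms(3,4)])
    fix m r G assume a: "0 < r" "ball (0::complex) r \<subseteq> ball 0 1" "G holomorphic_on ball 0 r" "G 0 \<noteq> 0"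
      "\<And>z. z \<in> ball 0 r \<Longrightarrow> f z = z^m * G z"
    show thesis using that[OF a] .
  qed
  have gd: "(g has_field_derivative deriv g z) (at z)" if "z \<in> ball 0 r" for z
    using holomorphic_on_imp_differentiable_at[OF gh open_ball that]
    by (simp add: DERIV_deriv_iff_field_differentiable)
  have Z: "z^m * (l * (of_nat (m+1) * g z + z * deriv g z) - g z / (1 - of_real t * z)) = 0"
    if z: "z \<in> ball 0 r" for z
  proof -
    have zb: "z \<in> ball 0 1" using z r by auto
    have d1: "((\<lambda>z. z * f z) has_field_derivative f z + z * deriv f z) (at z)"
      using fd[OF zb] by (auto intro!: derivative_eq_intros)
    have d2: "((\<lambda>z. z^(m+1) * g z) has_field_derivative of_nat (m+1) * z^m * g z + z^(m+1) * deriv g z) (at z)"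
      using DERIV_mult'[OF DERIV_power[OF DERIV_ident, where n="m+1" and x=z and s=UNIV] gd[OF z]] by (simp add: algebra_simps)
    have d1': "((\<lambda>z. z^(m+1) * g z) has_field_derivative f z + z * deriv f z) (at z)"
      by (rule has_field_derivative_transform_within_open[OF d1 open_ball z]) (auto simp: fg)
    have "f z + z * deriv f z = of_nat (m+1) * z^m * g z + z^(m+1) * deriv g z"
      using DERIV_unique[OF d1' d2] .
    hence "l * (of_nat (m+1) * z^m * g z + z^(m+1) * deriv g z) = z^m * g z / (1 - of_real t * z)"
      using star[OF zb] fg[OF z] by simp
    thus ?thesis by (simp add: algebra_simps)
  qed
  have "continuous_on (ball 0 r) (\<lambda>z. l * (of_nat (m+1) * g z + z * deriv g z) - g z / (1 - of_real t * z))"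
    using gh r den_props(3)[OF assms(1,2)]
    by (intro holomorphic_on_imp_continuous_on holomorphic_intros) auto
  from vanish0[OF r(1) Z this] have "l * of_nat (m+1) * g 0 = g 0" by (simp add: algebra_simps)
  hence "l * of_nat (m+1) = 1" using g0 by simp
  moreover have ne: "of_nat (m+1) \<noteq> (0::complex)" by (simp only: of_nat_eq_0_iff)
  ultimately have "l = 1 / of_nat (m+1)" by (simp add: eq_divide_eq)
  thus ?thesis by blast
qed

definition em :: "real \<Rightarrow> nat \<Rightarrow> complex \<Rightarrow> complex" where
  "em t m z = (if norm z < 1 then z^m / (1 - of_real t * z)^(m+1) else 0)"

lemma em_Hv:
  assumes "0 \<le> t" "t < 1"
  shows "em t m \<in> Hv 0"
proof (rule HvI)
  have "(\<lambda>z. z^m / (1 - of_real t * z)^(m+1)) holomorphic_on ball 0 1"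
    using den_props(3)[OF assms] by (intro holomorphic_intros) auto
  thus "em t m holomorphic_on ball 0 1" by (rule holomorphic_transform) (auto simp: em_def)
  show "em t m z = 0" if "1 \<le> norm z" for z using that by (auto simp: em_def)
  fix z :: complex assume z: "z \<in> ball 0 1"
  have d: "(1 - t)^(m+1) \<le> norm (1 - of_real t * z)^(m+1)" using den_props(2)[OF assms, of z] z assms
    by (intro power_mono) auto
  have p: "0 < (1 - t)^(m+1)" using assms by simp
  have "norm (em t m z) = norm z ^ m / norm (1 - of_real t * z)^(m+1)" using z by (simp add: em_def norm_divide norm_power norm_mult del: power_Suc)
  also have "\<dots> \<le> 1 / norm (1 - of_real t * z)^(m+1)" using z by (intro divide_right_mono) (auto simp: power_le_one)
  also have "\<dots> \<le> 1 / (1 - t)^(m+1)" using d p by (intro divide_left_mono) auto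
  finally show "wvk 0 z * norm (em t m z) \<le> 1 / (1 - t)^(m+1)" by (simp add: wvk_def)
qed

lemma em_nonzero: assumes "0 \<le> t" "t < 1" shows "em t m \<noteq> (\<lambda>z. 0)"
proof
  assume "em t m = (\<lambda>z. 0)"
  hence "em t m (1/2) = 0" by simp
  moreover have "1 - of_real t * (1/2::complex) \<noteq> 0" using den_props(3)[OF assms, of "1/2"] by simp
  ultimately show False by (simp add: em_def)
qed

lemma q_deriv:
  fixes x :: complex
  assumes "1 - of_real t * x \<noteq> 0"
  shows "((\<lambda>x. x / (1 - of_real t * x)) has_field_derivative 1 / (1 - of_real t * x)^2) (at x)"
proof -
  have "((\<lambda>x. x / (1 - of_real t * x)) has_field_derivative
      (1 * (1 - of_real t * x) - x * (0 - of_real t * 1)) / ((1 - of_real t * x) * (1 - of_real t * x))) (at x)"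
    by (rule DERIV_divide DERIV_diff DERIV_cmult DERIV_ident DERIV_const assms | simp add: assms)+
  moreover have "(1 * (1 - of_real t * x) - x * (0 - of_real t * 1)) = (1::complex)" by (simp add: algebra_simps)
  ultimately show ?thesis by (simp add: power2_eq_square)
qed

lemma em_eigen:
  assumes "0 \<le> t" "t < 1"
  shows "(\<lambda>z. 1 / of_nat (m+1) * em t m z - Ces t (em t m) z) = (\<lambda>z. 0)"
proof
  fix z :: complex
  define H where "H = (\<lambda>z::complex. (z / (1 - of_real t * z))^(m+1) / of_nat (m+1))"
  have H: "(H has_field_derivative em t m x / (1 - of_real t * x)) (at x)" if x: "x \<in> ball 0 1" for x
  proof -
    define d where "d = 1 - of_real t * x"
    have d: "d \<noteq> 0" using den_props(3)[OF assms] x by (auto simp: d_def)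
    have "((\<lambda>x. (x / (1 - of_real t * x))^(m+1)) has_field_derivative
        of_nat (m+1) * (x / d)^(m+1-1) * (1 / d^2)) (at x)"
      using DERIV_power[OF q_deriv[OF d[unfolded d_def]], of "m+1"] by (simp add: d_def)
    hence "(H has_field_derivative (of_nat (m+1) * (x / d)^(m+1-1) * (1 / d^2)) / of_nat (m+1)) (at x)"
      unfolding H_def by (rule DERIV_cdivide)
    moreover have "(of_nat (m+1) * (x / d)^(m+1-1) * (1 / d^2)) / of_nat (m+1) = (x/d)^m / d^2"
      by (simp del: of_nat_Suc)
    moreover have "(x/d)^m / d^2 = em t m x / (1 - of_real t * x)"
      using x d by (simp add: em_def d_def power_divide power2_eq_square)
    ultimately show ?thesis by simp
  qed
  show "1 / of_nat (m+1) * em t m z - Ces t (em t m) z = 0"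
  proof (cases "z \<in> ball 0 1 \<and> z \<noteq> 0")
    case True
    define d where "d = 1 - of_real t * z"
    have d: "d \<noteq> 0" using den_props(3)[OF assms] True by (auto simp: d_def)
    have "Ces t (em t m) z = (H z - H 0) / z" using Ces_eq[OF H] True by blast
    also have "\<dots> = (z / d)^(m+1) / of_nat (m+1) / z" by (simp add: H_def d_def)
    also have "\<dots> = z^m / d^(m+1) / of_nat (m+1)"
      using True by (simp add: power_divide)
    also have "\<dots> = 1 / of_nat (m+1) * em t m z" using True by (simp add: em_def d_def)
    finally show ?thesis by simp
  next
    case False
    thus ?thesis by (cases m) (auto simp: Ces_def em_def)
  qed
qed

lemma point_spec:
  assumes "0 \<le> t" "t < 1"
  shows "VH_point_spectrum (Ces t) = {1 / of_nat (m + 1) | m :: nat. True}"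
proof
  show "VH_point_spectrum (Ces t) \<subseteq> {1 / of_nat (m + 1) | m :: nat. True}"
  proof
    fix l assume "l \<in> VH_point_spectrum (Ces t)"
    then obtain f where f: "f \<in> VH" "f \<noteq> (\<lambda>z. 0)" "(\<lambda>z. l * f z - Ces t f z) = (\<lambda>z. 0)"
      unfolding VH_point_spectrum_def by auto
    have "\<exists>z\<in>ball 0 1. f z \<noteq> 0" using f(2) VH_zero_iff[OF f(1)] by auto
    moreover have "\<And>z. l * f z = Ces t f z"
    proof -
      fix z have "l * f z - Ces t f z = 0" using fun_cong[OF f(3), of z] by simp
      thus "l * f z = Ces t f z" by simp
    qed
    ultimately have "\<exists>m. l = 1 / of_nat (m+1)"
      by (intro eigen_class[OF assms VH_hol[OF f(1)]]) auto
    then obtain m where "l = 1 / of_nat (m+1)" by blast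
    thus "l \<in> {1 / of_nat (m + 1) | m :: nat. True}" by auto
  qed
  show "{1 / of_nat (m + 1) | m :: nat. True} \<subseteq> VH_point_spectrum (Ces t)"
  proof
    fix l :: complex assume "l \<in> {1 / of_nat (m + 1) | m :: nat. True}"
    then obtain m where l: "l = 1 / of_nat (m+1)" by auto
    have "em t m \<in> VH" using em_Hv[OF assms] unfolding VH_iff by auto
    thus "l \<in> VH_point_spectrum (Ces t)"
      unfolding VH_point_spectrum_def using em_nonzero[OF assms, of m] em_eigen[OF assms, of m] l by auto
  qed
qed

lemma inj_res:
  assumes "0 \<le> t" "t < 1" "l \<notin> {1 / of_nat (m + 1) | m :: nat. True}" "f \<in> VH"
    "(\<lambda>z. l * f z - Ces t f z) = (\<lambda>z. 0)"
  shows "f = (\<lambda>z. 0)"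
proof (rule ccontr)
  assume "f \<noteq> (\<lambda>z. 0)"
  hence "l \<in> VH_point_spectrum (Ces t)" unfolding VH_point_spectrum_def using assms(4,5) by auto
  thus False using point_spec[OF assms(1,2)] assms(3) by simp
qed

lemma beta_pos:
  fixes b :: complex
  assumes "\<And>n. of_nat n + b \<noteq> 0"
  obtains \<beta> where "0 < \<beta>" "\<And>n. \<beta> \<le> norm (of_nat n + b)"
proof -
  define N where "N = nat \<lceil>\<bar>Re b\<bar>\<rceil> + 1"
  define \<beta> where "\<beta> = Min (insert 1 ((\<lambda>n. norm (of_nat n + b)) ` {..<N}))"
  have fin: "finite (insert 1 ((\<lambda>n. norm (of_nat n + b)) ` {..<N}))" by simp
  have "0 < \<beta>" unfolding \<beta>_def using assms by (subst Min_gr_iff[OF fin]) auto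
  moreover have "\<beta> \<le> norm (of_nat n + b)" for n
  proof (cases "n < N")
    case True thus ?thesis unfolding \<beta>_def by (intro Min_le[OF fin]) auto
  next
    case False
    hence "real n \<ge> \<bar>Re b\<bar> + 1" unfolding N_def by linarith
    hence "1 \<le> \<bar>Re (of_nat n + b)\<bar>" by simp
    also have "\<dots> \<le> norm (of_nat n + b)" by (rule abs_Re_le_cmod)
    finally have "1 \<le> norm (of_nat n + b)" .
    moreover have "\<beta> \<le> 1" unfolding \<beta>_def by (intro Min_le[OF fin]) auto
    ultimately show ?thesis by linarith
  qed
  ultimately show ?thesis using that by blast
qed

lemma cauchy_coeff:
  assumes hol: "\<psi> holomorphic_on ball 0 1" and bd: "\<And>z. z \<in> ball 0 1 \<Longrightarrow> wvk k z * norm (\<psi> z) \<le> M"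
    and \<rho>: "0 < \<rho>" "\<rho> < 1"
  shows "norm ((deriv ^^ n) \<psi> 0 / fact n) \<le> (M / wvk k (of_real \<rho>)) / \<rho>^n"
proof -
  have wp: "0 < wvk k (of_real \<rho>)" using wvk_props \<rho> by auto
  have "norm ((deriv ^^ n) \<psi> 0) \<le> fact n * (M / wvk k (of_real \<rho>)) / \<rho>^n"
  proof (rule Cauchy_inequality)
    show "\<psi> holomorphic_on ball 0 \<rho>" by (rule holomorphic_on_subset[OF hol]) (use \<rho> in auto)
    show "continuous_on (cball 0 \<rho>) \<psi>"
      by (rule continuous_on_subset[OF holomorphic_on_imp_continuous_on[OF hol]]) (use \<rho> in auto)
    fix x :: complex assume x: "norm (0 - x) = \<rho>"
    hence xb: "x \<in> ball 0 1" using \<rho> by auto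
    have "wvk k (of_real \<rho>) \<le> wvk k x" using x \<rho> by (intro wvk_mono) auto
    hence "wvk k (of_real \<rho>) * norm (\<psi> x) \<le> M" using bd[OF xb] by (meson mult_right_mono norm_ge_zero order_trans)
    thus "norm (\<psi> x) \<le> M / wvk k (of_real \<rho>)" using wp by (simp add: le_divide_eq mult.commute)
  qed (use \<rho> in auto)
  thus ?thesis by (simp add: norm_divide field_simps)
qed

lemma coef_bound:
  fixes c d w :: complex
  assumes "norm c \<le> X" "\<beta> \<le> norm d" "0 < \<beta>"
  shows "norm (c / d * w) \<le> X / \<beta> * norm w"
proof -
  have X0: "0 \<le> X" using assms(1) norm_ge_zero[of c] by linarith
  have "norm c / norm d \<le> X / \<beta>" using assms X0 by (intro frac_le) auto
  hence "norm c / norm d * norm w \<le> X / \<beta> * norm w" by (rule mult_right_mono) simp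
  thus ?thesis by (simp add: norm_mult norm_divide)
qed

definition Dco :: "complex \<Rightarrow> (complex \<Rightarrow> complex) \<Rightarrow> nat \<Rightarrow> complex" where
  "Dco b \<psi> n = ((deriv ^^ n) \<psi> 0 / fact n) / (of_nat n + b)"

definition Dser :: "complex \<Rightarrow> (complex \<Rightarrow> complex) \<Rightarrow> complex \<Rightarrow> complex" where
  "Dser b \<psi> z = (\<Sum>n. Dco b \<psi> n * z^n)"

locale Dsetup =
  fixes b :: complex and \<beta> :: real and \<psi> :: "complex \<Rightarrow> complex" and k :: nat and M :: real
  assumes \<beta>: "0 < \<beta>" "\<And>n. \<beta> \<le> norm (of_nat n + b)"
    and hol: "\<psi> holomorphic_on ball 0 1"
    and bd: "\<And>z. z \<in> ball 0 1 \<Longrightarrow> wvk k z * norm (\<psi> z) \<le> M"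
begin

lemma M0: "0 \<le> M"
proof -
  have "0 \<le> wvk k 0 * norm (\<psi> 0)" using wvk_props[of 0 k] by simp
  also have "\<dots> \<le> M" using bd[of 0] by simp
  finally show ?thesis .
qed

lemma Dco_bound:
  assumes "0 < \<rho>" "\<rho> < 1"
  shows "norm (Dco b \<psi> n * z^n) \<le> (M / wvk k (of_real \<rho>)) / \<beta> * (norm z / \<rho>)^n"
proof -
  have "norm (Dco b \<psi> n * z^n) \<le> ((M / wvk k (of_real \<rho>)) / \<rho>^n) / \<beta> * norm (z^n)"
    unfolding Dco_def by (rule coef_bound[OF cauchy_coeff[OF hol bd assms] \<beta>(2) \<beta>(1)])
  thus ?thesis by (simp add: norm_power power_divide ac_simps)
qed

lemma Dco_summable:
  assumes "norm z < 1"
  shows "summable (\<lambda>n. Dco b \<psi> n * z^n)"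
proof -
  define \<rho> where "\<rho> = (norm z + 1) / 2"
  have nz: "0 \<le> norm z" by simp
  have r1: "0 < \<rho>" unfolding \<rho>_def by (intro divide_pos_pos add_nonneg_pos) auto
  have r2: "\<rho> < 1" unfolding \<rho>_def using assms nz by (simp add: field_simps)
  have r3: "norm z < \<rho>" unfolding \<rho>_def using assms nz by (simp add: field_simps)
  note \<rho> = r1 r2 r3
  have g: "summable (\<lambda>n. (M / wvk k (of_real \<rho>)) / \<beta> * (norm z / \<rho>)^n)"
    using \<rho> by (intro summable_mult summable_geometric) auto
  show ?thesis by (rule summable_comparison_test'[OF g Dco_bound[OF \<rho>(1,2)]])
qed

lemma Dser_deriv:
  assumes "z \<in> ball 0 1"
  shows "(Dser b \<psi> has_field_derivative (\<Sum>n. diffs (Dco b \<psi>) n * z^n)) (at z)"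
proof -
  have "((\<lambda>z. \<Sum>n. Dco b \<psi> n * z^n) has_field_derivative (\<Sum>n. diffs (Dco b \<psi>) n * z^n)) (at z)"
    by (rule termdiffs_strong'[of 1]) (use assms Dco_summable in auto)
  thus ?thesis by (simp add: Dser_def[abs_def])
qed

lemma Dser_hol: "Dser b \<psi> holomorphic_on ball 0 1"
proof (subst holomorphic_on_open[OF open_ball], intro ballI exI)
  fix x :: complex assume "x \<in> ball 0 1"
  thus "(Dser b \<psi> has_field_derivative (\<Sum>n. diffs (Dco b \<psi>) n * x^n)) (at x)" by (rule Dser_deriv)
qed

lemma Dser_ode:
  assumes z: "z \<in> ball 0 1"
  shows "z * deriv (Dser b \<psi>) z + b * Dser b \<psi> z = \<psi> z"
proof -
  have nz: "norm z < 1" using z by simp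
  have dv: "deriv (Dser b \<psi>) z = (\<Sum>n. diffs (Dco b \<psi>) n * z^n)"
    using DERIV_imp_deriv[OF Dser_deriv[OF z]] .
  have sd: "summable (\<lambda>n. diffs (Dco b \<psi>) n * z^n)"
    by (rule termdiff_converges[of z 1]) (use nz Dco_summable in auto)
  define S1 where "S1 = (\<lambda>n. of_nat n * Dco b \<psi> n * z^n)"
  have "(\<lambda>n. z * (diffs (Dco b \<psi>) n * z^n)) sums (z * deriv (Dser b \<psi>) z)"
    using sums_mult[OF summable_sums[OF sd], of z] dv by simp
  moreover have "(\<lambda>n. z * (diffs (Dco b \<psi>) n * z^n)) = (\<lambda>n. S1 (Suc n))"
    by (auto simp: S1_def diffs_def fun_eq_iff algebra_simps)
  ultimately have "(\<lambda>n. S1 (Suc n)) sums (z * deriv (Dser b \<psi>) z)" by simp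
  hence s1: "S1 sums (z * deriv (Dser b \<psi>) z)" by (subst (asm) sums_Suc_iff) (simp add: S1_def)
  have s2: "(\<lambda>n. b * (Dco b \<psi> n * z^n)) sums (b * Dser b \<psi> z)"
    unfolding Dser_def by (rule sums_mult[OF summable_sums[OF Dco_summable[OF nz]]])
  have s3: "(\<lambda>n. S1 n + b * (Dco b \<psi> n * z^n)) sums (z * deriv (Dser b \<psi>) z + b * Dser b \<psi> z)"
    by (rule sums_add[OF s1 s2])
  have eq: "S1 n + b * (Dco b \<psi> n * z^n) = (deriv ^^ n) \<psi> 0 / fact n * (z - 0)^n" for n
  proof -
    have ne: "of_nat n + b \<noteq> 0"
    proof
      assume "of_nat n + b = 0" with \<beta>(2)[of n] \<beta>(1) show False by simp
    qed
    have "S1 n + b * (Dco b \<psi> n * z^n) = (of_nat n + b) * Dco b \<psi> n * z^n"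
      by (simp add: S1_def algebra_simps)
    also have "\<dots> = (deriv ^^ n) \<psi> 0 / fact n * (z - 0)^n" using ne by (simp add: Dco_def)
    finally show ?thesis .
  qed
  have "(\<lambda>n. (deriv ^^ n) \<psi> 0 / fact n * (z - 0)^n) sums \<psi> z"
    by (rule holomorphic_power_series[OF hol z])
  with s3 show ?thesis unfolding eq by (metis sums_unique2)
qed

end

definition Kc :: "complex \<Rightarrow> real" where "Kc b = exp (\<bar>Re b\<bar> * ln 4)"

lemma Kc_ge1: "1 \<le> Kc b"
  unfolding Kc_def by (simp add: mult_nonneg_nonneg)

lemma Kc_bounds:
  assumes "1/4 \<le> s" "s \<le> 1"
  shows "exp (Re b * ln s) \<le> Kc b" "exp (- (Re b * ln s)) \<le> Kc b"
proof -
  have s0: "0 < s" using assms by simp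
  have "ln s \<le> 0" using assms s0 by simp
  moreover have "ln (1/4) \<le> ln s" using assms by (subst ln_le_cancel_iff) auto
  hence "- ln 4 \<le> ln s" by (simp add: ln_div)
  ultimately have ab: "\<bar>ln s\<bar> \<le> ln 4" by linarith
  have "\<bar>Re b * ln s\<bar> \<le> \<bar>Re b\<bar> * ln 4" unfolding abs_mult by (rule mult_left_mono[OF ab]) simp
  hence "Re b * ln s \<le> \<bar>Re b\<bar> * ln 4" "- (Re b * ln s) \<le> \<bar>Re b\<bar> * ln 4" by linarith+
  thus "exp (Re b * ln s) \<le> Kc b" "exp (- (Re b * ln s)) \<le> Kc b" unfolding Kc_def by simp_all
qed

lemma norm_exp_Ln_real:
  assumes "0 < s"
  shows "norm (exp (b * Ln (of_real s))) = exp (Re b * ln s)"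
  using assms by (simp add: Ln_of_real)

lemma seg_real:
  assumes "w \<in> closed_segment (complex_of_real a) (of_real c)" "a \<le> c"
  obtains s where "w = of_real s" "a \<le> s" "s \<le> c"
proof -
  obtain u where u: "0 \<le> u" "u \<le> 1" "w = (1 - u) *\<^sub>R of_real a + u *\<^sub>R of_real c"
    using assms(1) by (auto simp: closed_segment_def)
  define s where "s = (1 - u) * a + u * c"
  have "w = of_real s" using u(3) by (simp add: s_def scaleR_conv_of_real)
  moreover have "a \<le> s"
  proof -
    have "u * a \<le> u * c" using u assms(2) by (intro mult_left_mono) auto
    thus ?thesis by (simp add: s_def algebra_simps)
  qed
  moreover have "s \<le> c"
  proof -
    have "(1 - u) * a \<le> (1 - u) * c" using u assms(2) by (intro mult_left_mono) auto
    thus ?thesis by (simp add: s_def algebra_simps)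
  qed
  ultimately show ?thesis using that by blast
qed

context Dsetup begin

lemma Dser_d: "y \<in> ball 0 1 \<Longrightarrow> (Dser b \<psi> has_field_derivative deriv (Dser b \<psi>) y) (at y)"
  using Dser_deriv DERIV_imp_deriv by metis

lemma near0:
  assumes "norm z \<le> 1/4"
  shows "norm (Dser b \<psi> z) \<le> 2 * M / \<beta>"
proof -
  have w: "wvk k (of_real (1/2)) = 1" by (rule wvk_small) simp
  have bd1: "norm (Dco b \<psi> n * z^n) \<le> M / \<beta> * (1/2)^n" for n
  proof -
    have "norm (Dco b \<psi> n * z^n) \<le> (M / wvk k (of_real (1/2))) / \<beta> * (norm z / (1/2))^n"
      by (rule Dco_bound) auto
    also have "\<dots> = M / \<beta> * (norm z / (1/2))^n" unfolding w by simp
    also have "\<dots> \<le> M / \<beta> * (1/2)^n"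
    proof -
      have "norm z / (1/2) \<le> 1/2" using assms by simp
      hence "(norm z / (1/2))^n \<le> (1/2)^n" by (intro power_mono) auto
      thus ?thesis using M0 \<beta>(1) by (intro mult_left_mono) auto
    qed
    finally show ?thesis .
  qed
  have sg: "summable (\<lambda>n. M / \<beta> * (1/2::real)^n)" by (intro summable_mult summable_geometric) auto
  have "norm (Dser b \<psi> z) \<le> (\<Sum>n. M / \<beta> * (1/2::real)^n)"
    unfolding Dser_def by (rule norm_suminf_le[OF bd1 sg])
  also have "\<dots> = M / \<beta> * 2" by (subst suminf_mult) (auto simp: suminf_geometric)
  finally show ?thesis by (simp add: mult.commute)
qed

lemma far:
  assumes z: "z \<in> ball 0 1" "1/4 < norm z"
  shows "norm (Dser b \<psi> z) \<le> Kc b * (Kc b * (2 * M / \<beta>) + Kc b * 4 * (M / wvk k z))"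
proof -
  define r where "r = norm z"
  have r: "1/4 < r" "r < 1" using z by (auto simp: r_def)
  define u where "u = z / of_real r"
  have r0: "0 < r" using r by simp
  have u: "norm u = 1" "of_real r * u = z" using r0 by (auto simp: u_def r_def norm_divide)
  define \<Psi> where "\<Psi> = Dser b \<psi>"
  define \<phi> where "\<phi> = (\<lambda>w. exp (b * Ln w) * \<Psi> (w * u))"
  define S where "S = closed_segment (complex_of_real (1/4)) (of_real r)"
  have wz: "0 < wvk k z" using wvk_props z by auto
  define K where "K = Kc b"
  define B where "B = K * 4 * (M / wvk k z)"
  have der: "(\<phi> has_field_derivative (exp (b * Ln w) / w * \<psi> (w * u))) (at w within S)"
    and bnd: "norm (exp (b * Ln w) / w * \<psi> (w * u)) \<le> B" if w: "w \<in> S" for w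
  proof -
    obtain s where s: "w = of_real s" "1/4 \<le> s" "s \<le> r" using seg_real[OF w[unfolded S_def]] r by auto
    have s0: "0 < s" using s by simp
    have wpos: "w \<notin> \<real>\<^sub>\<le>\<^sub>0" using s0 s(1) by (auto simp: complex_nonpos_Reals_iff)
    have nwu: "norm (w * u) = s" using s0 s(1) u by (simp add: norm_mult)
    have wu: "w * u \<in> ball 0 1" using nwu s r by simp
    have w0: "w \<noteq> 0" using s0 s(1) by simp
    have e: "((\<lambda>w. exp (b * Ln w)) has_field_derivative exp (b * Ln w) * (b * inverse w)) (at w)"
      by (rule DERIV_chain2[OF DERIV_exp DERIV_cmult[OF has_field_derivative_Ln[OF wpos]]])
    have p: "((\<lambda>w. \<Psi> (w * u)) has_field_derivative deriv \<Psi> (w * u) * (1 * u)) (at w)"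
      unfolding \<Psi>_def by (rule DERIV_chain2[OF Dser_d[OF wu] DERIV_cmult_right[OF DERIV_ident]])
    have ode: "(w * u) * deriv \<Psi> (w * u) + b * \<Psi> (w * u) = \<psi> (w * u)"
      unfolding \<Psi>_def by (rule Dser_ode[OF wu])
    have "(\<phi> has_field_derivative exp (b * Ln w) * (b * inverse w) * \<Psi> (w * u) + deriv \<Psi> (w * u) * (1 * u) * exp (b * Ln w)) (at w)"
      unfolding \<phi>_def by (rule DERIV_mult[OF e p])
    moreover have "exp (b * Ln w) * (b * inverse w) * \<Psi> (w * u) + deriv \<Psi> (w * u) * (1 * u) * exp (b * Ln w)
        = exp (b * Ln w) / w * \<psi> (w * u)"
      unfolding ode[symmetric] using w0 by (simp add: field_simps)
    ultimately show "(\<phi> has_field_derivative (exp (b * Ln w) / w * \<psi> (w * u))) (at w within S)"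
      by (simp add: has_field_derivative_at_within)
    have k1: "exp (Re b * ln s) \<le> K" unfolding K_def by (rule Kc_bounds(1)) (use s r in auto)
    have k2: "1 / s \<le> 4" using s by (simp add: field_simps)
    have "wvk k z \<le> wvk k (w * u)" using nwu s(3) wu z(1) by (intro wvk_mono) (auto simp: r_def)
    hence "wvk k z * norm (\<psi> (w * u)) \<le> M" using bd[OF wu] by (meson mult_right_mono norm_ge_zero order_trans)
    hence k3: "norm (\<psi> (w * u)) \<le> M / wvk k z" using wz by (simp add: le_divide_eq mult.commute)
    have "norm (exp (b * Ln w) / w * \<psi> (w * u)) = exp (Re b * ln s) * (1 / s) * norm (\<psi> (w * u))"
      using s0 s(1) by (simp add: norm_mult norm_divide norm_exp_Ln_real)
    also have "\<dots> \<le> K * 4 * (M / wvk k z)"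
      using k1 k2 k3 s0 Kc_ge1[of b] unfolding K_def by (intro mult_mono) auto
    finally show "norm (exp (b * Ln w) / w * \<psi> (w * u)) \<le> B" by (simp add: B_def)
  qed
  have ends: "complex_of_real r \<in> S" "complex_of_real (1/4) \<in> S" by (auto simp: S_def)
  have "norm (\<phi> (of_real r) - \<phi> (of_real (1/4))) \<le> B * norm (complex_of_real r - of_real (1/4))"
    by (rule field_differentiable_bound[OF _ der bnd ends]) (auto simp: S_def)
  also have "\<dots> \<le> B * 1"
  proof (rule mult_left_mono)
    have "complex_of_real r - of_real (1/4) = of_real (r - 1/4)" by simp
    hence "norm (complex_of_real r - of_real (1/4)) = \<bar>r - 1/4\<bar>" by (simp only: norm_of_real)
    thus "norm (complex_of_real r - of_real (1/4)) \<le> 1" using r by simp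
    show "0 \<le> B" using wz M0 Kc_ge1[of b] by (simp add: B_def K_def)
  qed
  finally have dphi: "norm (\<phi> (of_real r) - \<phi> (of_real (1/4))) \<le> B" by simp
  have ne4: "norm (exp (b * Ln (complex_of_real (1/4)))) = exp (Re b * ln (1/4))"
    by (rule norm_exp_Ln_real) simp
  have "norm (\<phi> (of_real (1/4))) = exp (Re b * ln (1/4)) * norm (\<Psi> (of_real (1/4) * u))"
    unfolding \<phi>_def norm_mult ne4 ..
  also have "\<dots> \<le> K * (2 * M / \<beta>)"
  proof (rule mult_mono)
    show "exp (Re b * ln (1/4)) \<le> K" unfolding K_def by (rule Kc_bounds(1)) auto
    show "norm (\<Psi> (of_real (1/4) * u)) \<le> 2 * M / \<beta>"
      unfolding \<Psi>_def by (rule near0) (simp add: norm_mult u)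
  qed (use Kc_ge1[of b] K_def in auto)
  finally have p4: "norm (\<phi> (of_real (1/4))) \<le> K * (2 * M / \<beta>)" .
  have "norm (\<phi> (of_real r)) \<le> K * (2 * M / \<beta>) + B"
    using dphi p4 norm_triangle_ineq2[of "\<phi> (of_real r)" "\<phi> (of_real (1/4))"] by linarith
  moreover have "norm (\<phi> (of_real r)) = exp (Re b * ln r) * norm (\<Psi> z)"
    using r0 u by (simp add: \<phi>_def norm_mult norm_exp_Ln_real)
  ultimately have "norm (\<Psi> z) \<le> exp (- (Re b * ln r)) * (K * (2 * M / \<beta>) + B)"
    by (simp add: exp_minus field_simps)
  also have "\<dots> \<le> K * (K * (2 * M / \<beta>) + B)"
  proof (rule mult_right_mono)
    show "exp (- (Re b * ln r)) \<le> K" unfolding K_def by (rule Kc_bounds(2)) (use r in auto)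
    show "0 \<le> K * (2 * M / \<beta>) + B" using M0 \<beta>(1) wz Kc_ge1[of b] by (auto simp: K_def B_def)
  qed
  finally show ?thesis by (simp add: \<Psi>_def K_def B_def)
qed

end

context Dsetup begin
lemma Dsol_bound:
  assumes z: "z \<in> ball 0 1"
  shows "wvk k z * norm (Dser b \<psi> z) \<le> (Kc b ^ 2 * (2 / \<beta> + 4)) * M"
proof -
  define K where "K = Kc b"
  have K1: "1 \<le> K" using Kc_ge1 by (simp add: K_def)
  have wz: "0 < wvk k z" "wvk k z \<le> 1" using wvk_props z by auto
  have base: "2 * M / \<beta> \<le> (K ^ 2 * (2 / \<beta> + 4)) * M"
  proof -
    have "2 * M / \<beta> = 1 * ((2 / \<beta>) * M)" by simp
    also have "\<dots> \<le> K^2 * ((2 / \<beta> + 4) * M)"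
      using K1 M0 \<beta>(1) by (intro mult_mono) (auto simp: one_le_power)
    finally show ?thesis by (simp add: mult.assoc)
  qed
  show ?thesis
  proof (cases "norm z \<le> 1/4")
    case True
    have "wvk k z * norm (Dser b \<psi> z) \<le> 1 * (2 * M / \<beta>)"
      using near0[OF True] wz by (intro mult_mono) auto
    thus ?thesis using base by (simp add: K_def)
  next
    case False
    have "wvk k z * norm (Dser b \<psi> z) \<le> wvk k z * (K * (K * (2 * M / \<beta>) + K * 4 * (M / wvk k z)))"
      using far[OF z] False wz by (intro mult_left_mono) (auto simp: K_def)
    also have "\<dots> = K^2 * (wvk k z * (2 * M / \<beta>) + 4 * M)"
      using wz by (simp add: field_simps power2_eq_square)
    also have "\<dots> \<le> K^2 * (1 * (2 * M / \<beta>) + 4 * M)"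
      using wz M0 \<beta>(1) by (intro mult_left_mono add_right_mono mult_right_mono) auto
    also have "\<dots> = (K ^ 2 * (2 / \<beta> + 4)) * M" by (simp add: field_simps)
    finally show ?thesis by (simp add: K_def)
  qed
qed
end

definition Ef :: "real \<Rightarrow> complex \<Rightarrow> complex \<Rightarrow> complex" where
  "Ef t c z = exp (c * Ln (1 - of_real t * z))"

definition KE :: "real \<Rightarrow> complex \<Rightarrow> real" where
  "KE t c = exp (\<bar>Re c\<bar> * (ln 2 - ln (1 - t)) + \<bar>Im c\<bar> * pi)"

lemma KE_pos: "0 < KE t c" by (simp add: KE_def)

context
  fixes t :: real
  assumes t: "0 \<le> t" "t < 1"
begin

lemma Ef_deriv:
  assumes z: "z \<in> ball 0 1"
  shows "((Ef t c) has_field_derivative Ef t c z * (c * (- of_real t / (1 - of_real t * z)))) (at z)"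
proof -
  have w: "1 - of_real t * z \<notin> \<real>\<^sub>\<le>\<^sub>0" using den_props(4)[OF t] z by auto
  have d1: "((\<lambda>z. 1 - of_real t * z) has_field_derivative - of_real t) (at z)"
    by (auto intro!: derivative_eq_intros)
  have "((\<lambda>z. Ln (1 - of_real t * z)) has_field_derivative inverse (1 - of_real t * z) * - of_real t) (at z)"
    by (rule DERIV_chain2[OF has_field_derivative_Ln[OF w] d1])
  from DERIV_chain2[OF DERIV_exp DERIV_cmult[OF this, of c]]
  show ?thesis by (simp add: Ef_def[abs_def] divide_inverse mult.commute mult.left_commute)
qed

lemma Ef_hol: "Ef t c holomorphic_on ball 0 1"
proof (subst holomorphic_on_open[OF open_ball], intro ballI exI)
  fix x :: complex assume "x \<in> ball 0 1"
  thus "(Ef t c has_field_derivative Ef t c x * (c * (- of_real t / (1 - of_real t * x)))) (at x)"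
    by (rule Ef_deriv)
qed

lemma Ef_add: "Ef t c z * Ef t d z = Ef t (c + d) z"
  by (simp add: Ef_def exp_add[symmetric] distrib_right)

lemma Ef_0: "Ef t c 0 = 1" by (simp add: Ef_def)

lemma Ef_m1:
  assumes "z \<in> ball 0 1"
  shows "Ef t (-1) z = 1 / (1 - of_real t * z)"
proof -
  have "1 - of_real t * z \<noteq> 0" using den_props(3)[OF t] assms by auto
  thus ?thesis by (simp add: Ef_def exp_minus divide_inverse)
qed

lemma Ef_bound:
  assumes z: "z \<in> ball 0 1"
  shows "norm (Ef t c z) \<le> KE t c"
proof -
  define w where "w = 1 - of_real t * z"
  have w0: "w \<noteq> 0" using den_props(3)[OF t] z by (auto simp: w_def)
  have wl: "1 - t \<le> norm w" "norm w \<le> 2" using den_props(2,5)[OF t] z by (auto simp: w_def)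
  have t1: "0 < 1 - t" using t by simp
  have l1: "ln (norm w) \<le> ln 2" using wl w0 by simp
  have l2: "ln (1 - t) \<le> ln (norm w)" using wl t1 by (subst ln_le_cancel_iff) auto
  have l3: "ln (1 - t) \<le> 0" using t t1 by simp
  have "\<bar>ln (norm w)\<bar> \<le> ln 2 - ln (1 - t)" unfolding abs_le_iff using l1 l2 l3 ln_ge_zero[of 2] by linarith
  hence A0: "\<bar>Re c\<bar> * \<bar>ln (norm w)\<bar> \<le> \<bar>Re c\<bar> * (ln 2 - ln (1 - t))" by (rule mult_left_mono) simp
  have "Re c * ln (norm w) \<le> \<bar>Re c * ln (norm w)\<bar>" by (rule abs_ge_self)
  hence A: "Re c * ln (norm w) \<le> \<bar>Re c\<bar> * (ln 2 - ln (1 - t))" using A0 unfolding abs_mult by linarith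
  have "\<bar>Im (Ln w)\<bar> \<le> pi" using mpi_less_Im_Ln[OF w0] Im_Ln_le_pi[OF w0] by linarith
  hence B0: "\<bar>Im c\<bar> * \<bar>Im (Ln w)\<bar> \<le> \<bar>Im c\<bar> * pi" by (rule mult_left_mono) simp
  have "- (Im c * Im (Ln w)) \<le> \<bar>Im c * Im (Ln w)\<bar>" by linarith
  hence B: "- (Im c * Im (Ln w)) \<le> \<bar>Im c\<bar> * pi" using B0 unfolding abs_mult by linarith
  have "Re (c * Ln w) = Re c * ln (norm w) - Im c * Im (Ln w)" using w0 by simp
  hence "Re (c * Ln w) \<le> \<bar>Re c\<bar> * (ln 2 - ln (1 - t)) + \<bar>Im c\<bar> * pi" using A B by linarith
  thus ?thesis by (simp add: Ef_def KE_def w_def[symmetric])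
qed

end

context
  fixes t :: real and l :: complex
  assumes t: "0 \<le> t" "t < 1"
    and lP: "l \<notin> {1 / of_nat (m + 1) | m :: nat. True}" and l0: "l \<noteq> 0"
begin

lemma b_ok: "of_nat n + (1 - 1 / l) \<noteq> 0"
proof
  assume "of_nat n + (1 - 1 / l) = 0"
  hence "1 / l = of_nat (n + 1)" by (simp add: algebra_simps)
  moreover have "l = 1 / (1 / l)" using l0 by simp
  ultimately have "l = 1 / of_nat (n + 1)" by simp
  thus False using lP by blast
qed

lemma res_construct:
  "\<exists>C. \<forall>k. \<forall>h\<in>Hv k. \<exists>f\<in>Hv k. (\<lambda>z. l * f z - Ces t f z) = h \<and> Hv_norm k f \<le> C * Hv_norm k h"
proof -
  define a where "a = 1 / l"
  define b where "b = 1 - a"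
  have bn: "\<And>n. of_nat n + b \<noteq> 0" using b_ok by (simp add: b_def a_def)
  obtain \<beta> where \<beta>: "0 < \<beta>" "\<And>n. \<beta> \<le> norm (of_nat n + b)" using beta_pos[OF bn] by blast
  define DC where "DC = Kc b ^ 2 * (2 / \<beta> + 4)"
  define C where "C = norm a + norm a ^ 2 * KE t (- a) * (DC * KE t (a - 1))"
  have la: "l * a = 1" using l0 by (simp add: a_def)
  have b0: "b \<noteq> 0" using bn[of 0] by simp
  show ?thesis
  proof (intro exI[of _ C] allI ballI)
    fix k h assume h: "h \<in> Hv k"
    define N where "N = Hv_norm k h"
    have N0: "0 \<le> N" using Hv_norm_nonneg[OF h] by (simp add: N_def)
    have hb: "\<And>z. z \<in> ball 0 1 \<Longrightarrow> wvk k z * norm (h z) \<le> N" using Hv_normD[OF h] by (simp add: N_def)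
    have hh: "h holomorphic_on ball 0 1" using HvD(1)[OF h] .
    define \<psi> where "\<psi> = (\<lambda>z. Ef t (a - 1) z * h z)"
    have \<psi>h: "\<psi> holomorphic_on ball 0 1" unfolding \<psi>_def using Ef_hol[OF t] hh by (intro holomorphic_intros)
    have \<psi>b: "wvk k z * norm (\<psi> z) \<le> KE t (a - 1) * N" if z: "z \<in> ball 0 1" for z
    proof -
      have "wvk k z * norm (\<psi> z) = norm (Ef t (a - 1) z) * (wvk k z * norm (h z))"
        by (simp add: \<psi>_def norm_mult)
      also have "\<dots> \<le> KE t (a - 1) * N"
        using Ef_bound[OF t z] hb[OF z] wvk_props[of z k] z KE_pos[of t "a - 1"] by (intro mult_mono) auto
      finally show ?thesis .
    qed
    interpret D: Dsetup b \<beta> \<psi> k "KE t (a - 1) * N"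
      by unfold_locales (use \<beta> \<psi>h \<psi>b in auto)
    define \<Psi> where "\<Psi> = Dser b \<psi>"
    have \<Psi>h: "\<Psi> holomorphic_on ball 0 1" unfolding \<Psi>_def by (rule D.Dser_hol)
    have ode: "z * deriv \<Psi> z + b * \<Psi> z = \<psi> z" if "z \<in> ball 0 1" for z
      unfolding \<Psi>_def by (rule D.Dser_ode[OF that])
    have \<Psi>b: "wvk k z * norm (\<Psi> z) \<le> DC * (KE t (a - 1) * N)" if "z \<in> ball 0 1" for z
      unfolding \<Psi>_def DC_def by (rule D.Dsol_bound[OF that])
    define g where "g = (\<lambda>z. a * h z + a^2 * Ef t (- a) z * \<Psi> z)"
    define f where "f = (\<lambda>z. if norm z < 1 then g z else 0)"
    have fg: "\<And>z. z \<in> ball 0 1 \<Longrightarrow> f z = g z" by (simp add: f_def)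
    have gh: "g holomorphic_on ball 0 1" unfolding g_def using hh \<Psi>h Ef_hol[OF t] by (intro holomorphic_intros)
    have fh: "f holomorphic_on ball 0 1" by (rule holomorphic_transform[OF gh]) (simp add: fg)
    have fb: "wvk k z * norm (f z) \<le> C * N" if z: "z \<in> ball 0 1" for z
    proof -
      have w: "0 < wvk k z" using wvk_props z by auto
      have "wvk k z * norm (f z) \<le> norm a * (wvk k z * norm (h z)) + norm a ^ 2 * norm (Ef t (- a) z) * (wvk k z * norm (\<Psi> z))"
      proof -
        have "norm (g z) \<le> norm a * norm (h z) + norm a ^ 2 * norm (Ef t (- a) z) * norm (\<Psi> z)"
          unfolding g_def using norm_triangle_ineq[of "a * h z" "a^2 * Ef t (- a) z * \<Psi> z"]
          by (simp add: norm_mult norm_power)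
        hence "wvk k z * norm (g z) \<le> wvk k z * (norm a * norm (h z) + norm a ^ 2 * norm (Ef t (- a) z) * norm (\<Psi> z))"
          using w by (intro mult_left_mono) auto
        thus ?thesis using fg[OF z] by (simp add: algebra_simps)
      qed
      also have "\<dots> \<le> norm a * N + norm a ^ 2 * KE t (- a) * (DC * (KE t (a - 1) * N))"
      proof (rule add_mono)
        show "norm a * (wvk k z * norm (h z)) \<le> norm a * N" using hb[OF z] by (rule mult_left_mono) simp
        have e: "norm a ^ 2 * norm (Ef t (- a) z) \<le> norm a ^ 2 * KE t (- a)"
          using Ef_bound[OF t z, of "- a"] by (rule mult_left_mono) simp
        show "norm a ^ 2 * norm (Ef t (- a) z) * (wvk k z * norm (\<Psi> z)) \<le> norm a ^ 2 * KE t (- a) * (DC * (KE t (a - 1) * N))"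
          by (rule mult_mono[OF e \<Psi>b[OF z]]) (use KE_pos[of t "- a"] w in auto)
      qed
      also have "\<dots> = C * N" by (simp add: C_def algebra_simps)
      finally show ?thesis .
    qed
    have fHv: "f \<in> Hv k" by (rule HvI[OF fh _ fb]) (simp add: f_def)
    have fnorm: "Hv_norm k f \<le> C * N" using fb by (intro Hv_norm_le) auto
    have FF: "((\<lambda>z. a * z * Ef t (- a) z * \<Psi> z) has_field_derivative f z / (1 - of_real t * z)) (at z)"
      if z: "z \<in> ball 0 1" for z
    proof -
      define d where "d = 1 - of_real t * z"
      have d0: "d \<noteq> 0" using den_props(3)[OF t] z by (auto simp: d_def)
      have dE: "(Ef t (- a) has_field_derivative Ef t (- a) z * (- a * (- of_real t / d))) (at z)"
        using Ef_deriv[OF t z, of "- a"] by (simp add: d_def)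
      have dP: "(\<Psi> has_field_derivative deriv \<Psi> z) (at z)"
        using holomorphic_on_imp_differentiable_at[OF \<Psi>h open_ball z]
        by (simp add: DERIV_deriv_iff_field_differentiable)
      have dz: "((\<lambda>z. a * z) has_field_derivative a * 1) (at z)" by (rule DERIV_cmult[OF DERIV_ident])
      have D1: "((\<lambda>z. a * z * Ef t (- a) z * \<Psi> z) has_field_derivative
          (a * 1 * Ef t (- a) z + Ef t (- a) z * (- a * (- of_real t / d)) * (a * z)) * \<Psi> z
          + deriv \<Psi> z * (a * z * Ef t (- a) z)) (at z)"
        by (rule DERIV_mult[OF DERIV_mult[OF dz dE] dP])
      define E where "E = Ef t (- a) z"
      define E1 where "E1 = Ef t (a - 1) z"
      have EE: "E * E1 = 1 / d" unfolding E_def E1_def d_def using Ef_add[OF t, of "- a" z "a - 1"] Ef_m1[OF t z] by simp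
      have od: "z * deriv \<Psi> z = E1 * h z - b * \<Psi> z" using ode[OF z] by (simp add: \<psi>_def E1_def algebra_simps)
      have dd: "d + of_real t * z = 1" by (simp add: d_def)
      have "(a * 1 * E + E * (- a * (- of_real t / d)) * (a * z)) * \<Psi> z + deriv \<Psi> z * (a * z * E)
          = a * E * \<Psi> z + a * a * E * (of_real t * z) * \<Psi> z / d + a * E * (z * deriv \<Psi> z)"
        using d0 by (simp add: field_simps)
      also have "\<dots> = a * E * \<Psi> z + a * a * E * (of_real t * z) * \<Psi> z / d + a * (E * E1) * h z - a * E * b * \<Psi> z"
        unfolding od by (simp add: algebra_simps)
      also have "\<dots> = a * a * E * \<Psi> z * ((d + of_real t * z) / d) + a * h z / d"
        unfolding EE b_def using d0 by (simp add: field_simps)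
      also have "\<dots> = g z / d" unfolding dd g_def E_def using d0 by (simp add: field_simps power2_eq_square)
      finally have "(a * 1 * E + E * (- a * (- of_real t / d)) * (a * z)) * \<Psi> z + deriv \<Psi> z * (a * z * E) = f z / d"
        using fg[OF z] by simp
      thus ?thesis using D1 unfolding E_def d_def by simp
    qed
    have eq: "(\<lambda>z. l * f z - Ces t f z) = h"
    proof
      fix z
      show "l * f z - Ces t f z = h z"
      proof (cases "norm z < 1")
        case False
        thus ?thesis using HvD(2)[OF h, of z] by (simp add: f_def Ces_out)
      next
        case True
        hence z: "z \<in> ball 0 1" by simp
        show ?thesis
        proof (cases "z = 0")
          case False
          have "Ces t f z = ((a * z * Ef t (- a) z * \<Psi> z) - (a * 0 * Ef t (- a) 0 * \<Psi> 0)) / z"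
            using Ces_eq[OF FF z False] by simp
          also have "\<dots> = a * Ef t (- a) z * \<Psi> z" using False by simp
          finally have "Ces t f z = a * Ef t (- a) z * \<Psi> z" .
          moreover have "l * f z = h z + a * Ef t (- a) z * \<Psi> z"
          proof -
            have "l * f z = (l * a) * h z + (l * a) * (a * Ef t (- a) z * \<Psi> z)"
              using fg[OF z] by (simp add: g_def algebra_simps power2_eq_square)
            thus ?thesis using la by simp
          qed
          ultimately show ?thesis by simp
        next
          case True
          have p0: "b * \<Psi> 0 = h 0" using ode[of 0] by (simp add: \<psi>_def Ef_0[OF t])
          hence P0: "\<Psi> 0 = h 0 / b" using b0 by (simp add: field_simps)
          have f0: "f 0 = a * h 0 + a^2 * (h 0 / b)" by (simp add: f_def g_def Ef_0[OF t] P0)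
          have "l * f 0 - Ces t f 0 = (l - 1) * f 0" using Ces_0[of t f] by (simp add: algebra_simps)
          also have "\<dots> = (l - 1) * (a * h 0 + a^2 * (h 0 / b))" by (simp only: f0)
          also have "\<dots> = h 0"
          proof -
            have l1: "l - 1 \<noteq> 0" using b0 l0 by (auto simp: b_def a_def)
            have bq: "b = (l - 1) / l" using l0 by (simp add: b_def a_def field_simps)
            have q: "a^2 * (h 0 / b) = h 0 / (l * (l - 1))" using l0 l1 by (simp add: a_def bq power2_eq_square field_simps)
            have "(l - 1) * (a * h 0 + a^2 * (h 0 / b)) = (l - 1) * h 0 / l + h 0 / l"
              unfolding q using l0 l1 by (simp add: a_def field_simps)
            also have "\<dots> = h 0" using l0 by (simp add: field_simps)
            finally show ?thesis .
          qed
          finally show ?thesis using True by simp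
        qed
      qed
    qed
    show "\<exists>f\<in>Hv k. (\<lambda>z. l * f z - Ces t f z) = h \<and> Hv_norm k f \<le> C * Hv_norm k h"
      using fHv eq fnorm by (auto simp: N_def)
  qed
qed

end

lemma zero_Hv: "(\<lambda>z. 0) \<in> Hv k"
  by (rule HvI[of _ _ 0]) auto

lemma zero_VH: "(\<lambda>z. 0) \<in> VH"
  using zero_Hv unfolding VH_iff by blast

lemma Ces_diff:
  assumes "0 \<le> t" "t < 1" "f holomorphic_on ball 0 1" "g holomorphic_on ball 0 1"
  shows "Ces t (\<lambda>z. f z - g z) = (\<lambda>z. Ces t f z - Ces t g z)"
proof -
  have gh: "(\<lambda>z. (-1) * g z) holomorphic_on ball 0 1" using assms(4) by (intro holomorphic_intros)
  have "Ces t (\<lambda>z. f z - g z) = Ces t (\<lambda>z. f z + (-1) * g z)" by simp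
  also have "\<dots> = (\<lambda>z. Ces t f z + Ces t (\<lambda>z. (-1) * g z) z)" by (rule Ces_add[OF assms(1,2,3) gh])
  also have "\<dots> = (\<lambda>z. Ces t f z - Ces t g z)" using Ces_cmult[OF assms(1,2,4), of "-1"] by simp
  finally show ?thesis .
qed

context
  fixes t :: real and l :: complex
  assumes t: "0 \<le> t" "t < 1"
    and lP: "l \<notin> {1 / of_nat (m + 1) | m :: nat. True}" and l0: "l \<noteq> 0"
begin

definition Lop :: "(complex \<Rightarrow> complex) \<Rightarrow> complex \<Rightarrow> complex" where
  "Lop f = (\<lambda>z. l * f z - Ces t f z)"

lemma Lop_uniq:
  assumes "f1 \<in> VH" "f2 \<in> VH" "Lop f1 = Lop f2"
  shows "f1 = f2"
proof -
  define g where "g = (\<lambda>z. f1 z - f2 z)"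
  have gV: "g \<in> VH" unfolding g_def using VH_diff assms by blast
  have "Ces t g = (\<lambda>z. Ces t f1 z - Ces t f2 z)"
    unfolding g_def by (rule Ces_diff[OF t VH_hol[OF assms(1)] VH_hol[OF assms(2)]])
  hence "(\<lambda>z. l * g z - Ces t g z) = (\<lambda>z. Lop f1 z - Lop f2 z)"
    by (auto simp: g_def Lop_def fun_eq_iff algebra_simps)
  also have "\<dots> = (\<lambda>z. 0)" using assms(3) by simp
  finally have "g = (\<lambda>z. 0)" by (rule inj_res[OF t lP gV])
  thus ?thesis by (auto simp: g_def fun_eq_iff)
qed

lemma Lop_add:
  assumes "f \<in> VH" "g \<in> VH"
  shows "Lop (\<lambda>z. f z + g z) = (\<lambda>z. Lop f z + Lop g z)"
  using Ces_add[OF t VH_hol[OF assms(1)] VH_hol[OF assms(2)]]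
  by (auto simp: Lop_def fun_eq_iff algebra_simps)

lemma Lop_cmult:
  assumes "f \<in> VH"
  shows "Lop (\<lambda>z. c * f z) = (\<lambda>z. c * Lop f z)"
  using Ces_cmult[OF t VH_hol[OF assms(1)]]
  by (auto simp: Lop_def fun_eq_iff algebra_simps)

definition Sop :: "(complex \<Rightarrow> complex) \<Rightarrow> complex \<Rightarrow> complex" where
  "Sop h = (THE f. f \<in> VH \<and> Lop f = h)"

lemma Sop_char:
  assumes "f \<in> VH" "Lop f = h"
  shows "Sop h = f"
  unfolding Sop_def using assms Lop_uniq by (intro the_equality) auto

lemma res_C: obtains C where
  "\<And>k h. h \<in> Hv k \<Longrightarrow> \<exists>f\<in>Hv k. Lop f = h \<and> Hv_norm k f \<le> C * Hv_norm k h"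
  using res_construct[OF t lP l0] unfolding Lop_def by blast

lemma Sop_VH: assumes "h \<in> VH" shows "Sop h \<in> VH" "Lop (Sop h) = h"
proof -
  obtain C where C: "\<And>k h. h \<in> Hv k \<Longrightarrow> \<exists>f\<in>Hv k. Lop f = h \<and> Hv_norm k f \<le> C * Hv_norm k h"
    using res_C by blast
  obtain k where "h \<in> Hv k" using assms by (auto simp: VH_iff)
  then obtain f where f: "f \<in> Hv k" "Lop f = h" using C by blast
  have fV: "f \<in> VH" using f(1) by (auto simp: VH_iff)
  have "Sop h = f" by (rule Sop_char[OF fV f(2)])
  thus "Sop h \<in> VH" "Lop (Sop h) = h" using fV f(2) by auto
qed

lemma Sop_linear: "VH_linear Sop"
  unfolding VH_linear_def
proof (intro conjI ballI allI)
  fix f assume "f \<in> VH" thus "Sop f \<in> VH" by (rule Sop_VH)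
next
  fix f g assume f: "f \<in> VH" and g: "g \<in> VH"
  show "Sop (\<lambda>z. f z + g z) = (\<lambda>z. Sop f z + Sop g z)"
  proof (rule Sop_char)
    show "(\<lambda>z. Sop f z + Sop g z) \<in> VH" using VH_add Sop_VH f g by blast
    show "Lop (\<lambda>z. Sop f z + Sop g z) = (\<lambda>z. f z + g z)"
      using Lop_add[OF Sop_VH(1)[OF f] Sop_VH(1)[OF g]] Sop_VH(2)[OF f] Sop_VH(2)[OF g] by simp
  qed
next
  fix c f assume f: "f \<in> VH"
  show "Sop (\<lambda>z. c * f z) = (\<lambda>z. c * Sop f z)"
  proof (rule Sop_char)
    show "(\<lambda>z. c * Sop f z) \<in> VH" using VH_cmult Sop_VH f by blast
    show "Lop (\<lambda>z. c * Sop f z) = (\<lambda>z. c * f z)"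
      using Lop_cmult[OF Sop_VH(1)[OF f]] Sop_VH(2)[OF f] by simp
  qed
qed

lemma Sop_cont: "VH_cont_op Sop"
proof (rule cont_opI[OF Sop_linear])
  fix k
  obtain C where C: "\<And>k h. h \<in> Hv k \<Longrightarrow> \<exists>f\<in>Hv k. Lop f = h \<and> Hv_norm k f \<le> C * Hv_norm k h"
    using res_C by blast
  show "\<exists>C. \<forall>f\<in>Hv k. Sop f \<in> Hv k \<and> Hv_norm k (Sop f) \<le> C * Hv_norm k f"
  proof (intro exI[of _ C] ballI)
    fix h assume h: "h \<in> Hv k"
    then obtain f where f: "f \<in> Hv k" "Lop f = h" "Hv_norm k f \<le> C * Hv_norm k h" using C by blast
    have "Sop h = f" by (rule Sop_char[OF _ f(2)]) (use f(1) in \<open>auto simp: VH_iff\<close>)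
    thus "Sop h \<in> Hv k \<and> Hv_norm k (Sop h) \<le> C * Hv_norm k h" using f by simp
  qed
qed

lemma in_resolvent: "l \<in> VH_resolvent (Ces t)"
  unfolding VH_resolvent_def
proof (intro CollectI exI[of _ Sop] conjI ballI)
  show "VH_cont_op Sop" by (rule Sop_cont)
  fix f assume f: "f \<in> VH"
  show "Sop (\<lambda>z. l * f z - Ces t f z) = f" using Sop_char[OF f] by (simp add: Lop_def)
  show "(\<lambda>z. l * Sop f z - Ces t (Sop f) z) = f" using Sop_VH(2)[OF f] by (simp add: Lop_def)
qed

end

lemma eig_not_res:
  assumes "0 \<le> t" "t < 1"
  shows "1 / of_nat (m + 1) \<notin> VH_resolvent (Ces t)"
proof
  assume "1 / of_nat (m + 1) \<in> VH_resolvent (Ces t)"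
  then obtain S where S: "VH_cont_op S" "\<forall>f\<in>VH. S (\<lambda>z. 1 / of_nat (m + 1) * f z - Ces t f z) = f"
    unfolding VH_resolvent_def by blast
  have eV: "em t m \<in> VH" using em_Hv[OF assms] unfolding VH_iff by blast
  have "S (\<lambda>z. 0) = em t m" using S(2) eV em_eigen[OF assms, of m] by metis
  moreover have lin: "\<forall>c. \<forall>f\<in>VH. S (\<lambda>z. c * f z) = (\<lambda>z. c * S f z)"
    using S(1) unfolding VH_cont_op_def VH_linear_def by blast
  have "S (\<lambda>z. 0) = (\<lambda>z. 0)" using lin[rule_format, OF zero_VH, of 0] by simp
  ultimately have "em t m = (\<lambda>z. 0)" by simp
  thus False using em_nonzero[OF assms] by simp
qed

definition fs :: "complex \<Rightarrow> complex" where "fs z = exp ((1/2) * Ln (1 - z))"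
definition f0 :: "complex \<Rightarrow> complex" where "f0 z = (if norm z < 1 then fs z else 0)"

lemma onemz:
  fixes z :: complex
  assumes "norm z < 1"
  shows "1 - z \<notin> \<real>\<^sub>\<le>\<^sub>0" "1 - z \<noteq> 0" "norm (1 - z) \<le> 2"
proof -
  have "Re z \<le> norm z" by (rule complex_Re_le_cmod)
  hence r: "0 < Re (1 - z)" using assms by simp
  thus "1 - z \<notin> \<real>\<^sub>\<le>\<^sub>0" by (auto simp: complex_nonpos_Reals_iff)
  show "1 - z \<noteq> 0" using r by auto
  have "norm (1 - z) \<le> 1 + norm z" using norm_triangle_ineq4[of 1 z] by simp
  thus "norm (1 - z) \<le> 2" using assms by simp
qed

lemma fs_deriv:
  assumes "norm z < 1"
  shows "(fs has_field_derivative fs z * ((1/2) * (inverse (1 - z) * -1))) (at z)"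
proof -
  have d1: "((\<lambda>z. 1 - z) has_field_derivative -1) (at z)" by (auto intro!: derivative_eq_intros)
  have "((\<lambda>z. Ln (1 - z)) has_field_derivative inverse (1 - z) * -1) (at z)"
    by (rule DERIV_chain2[OF has_field_derivative_Ln[OF onemz(1)[OF assms]] d1])
  from DERIV_chain2[OF DERIV_exp DERIV_cmult[OF this, of "1/2"]]
  show ?thesis by (simp add: fs_def[abs_def])
qed

lemma f0_Hv: "f0 \<in> Hv 0"
proof (rule HvI)
  have "fs holomorphic_on ball 0 1"
  proof (subst holomorphic_on_open[OF open_ball], intro ballI exI)
    fix x :: complex assume "x \<in> ball 0 1"
    thus "(fs has_field_derivative fs x * ((1/2) * (inverse (1 - x) * -1))) (at x)" by (intro fs_deriv) simp
  qed
  thus "f0 holomorphic_on ball 0 1" by (rule holomorphic_transform) (simp add: f0_def)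
  show "f0 z = 0" if "1 \<le> norm z" for z using that by (simp add: f0_def)
  fix z :: complex assume z: "z \<in> ball 0 1"
  hence nz: "norm z < 1" by simp
  have "norm (fs z) = exp (ln (norm (1 - z)) / 2)" using onemz(2)[OF nz] by (simp add: fs_def)
  also have "\<dots> \<le> exp (ln 2)"
  proof -
    have "ln (norm (1 - z)) \<le> ln 2" using onemz(2,3)[OF nz] by simp
    moreover have "0 \<le> ln (2::real)" by simp
    ultimately have "ln (norm (1 - z)) / 2 \<le> ln 2" by linarith
    thus ?thesis by (simp only: exp_le_cancel_iff)
  qed
  finally show "wvk 0 z * norm (f0 z) \<le> 2" using nz by (simp add: f0_def wvk_def)
qed

lemma big_L:
  fixes k :: nat and \<epsilon> :: real
  assumes "0 < \<epsilon>"
  obtains L :: real where "4 \<le> L" "L ^ k / exp (L / 2) < \<epsilon>"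
proof -
  have "((\<lambda>u. u ^ k / exp u) \<longlongrightarrow> (0::real)) at_top" by (rule tendsto_power_div_exp_0)
  hence "eventually (\<lambda>u. u ^ k / exp u < \<epsilon> / 2 ^ k) at_top"
    using assms by (intro order_tendstoD(2)) auto
  moreover have "eventually (\<lambda>u::real. 2 \<le> u) at_top" by (rule eventually_ge_at_top)
  ultimately have "eventually (\<lambda>u. u ^ k / exp u < \<epsilon> / 2 ^ k \<and> 2 \<le> u) at_top"
    by (rule eventually_conj)
  then obtain u where u: "u ^ k / exp u < \<epsilon> / 2 ^ k" "2 \<le> u"
    using eventually_happens[of _ at_top] by (auto simp: eventually_at_top_linorder)
  have "(2 * u) ^ k / exp (2 * u / 2) = 2 ^ k * (u ^ k / exp u)" by (simp add: power_mult_distrib)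
  also have "\<dots> < 2 ^ k * (\<epsilon> / 2 ^ k)" using u(1) by (intro mult_strict_left_mono) auto
  also have "\<dots> = \<epsilon>" by simp
  finally show ?thesis using that[of "2 * u"] u(2) by simp
qed

lemma zero_not_res:
  assumes t: "0 \<le> t" "t < 1"
  shows "0 \<notin> VH_resolvent (Ces t)"
proof
  assume "0 \<in> VH_resolvent (Ces t)"
  then obtain S where S: "VH_cont_op S" "\<forall>f\<in>VH. (\<lambda>z. 0 * S f z - Ces t (S f) z) = f"
    unfolding VH_resolvent_def by blast
  have f0V: "f0 \<in> VH" using f0_Hv unfolding VH_iff by blast
  define g where "g = S f0"
  have gV: "g \<in> VH" using S(1) f0V unfolding g_def VH_cont_op_def VH_linear_def by blast
  have Cg: "Ces t g z = - f0 z" for z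
  proof -
    have "(\<lambda>z. 0 * g z - Ces t g z) = f0" using S(2) f0V unfolding g_def by blast
    from fun_cong[OF this, of z] show ?thesis by (simp add: minus_equation_iff)
  qed
  obtain k where gk: "g \<in> Hv k" using gV unfolding VH_iff by blast
  obtain Cb where Cb: "\<forall>z\<in>ball 0 1. wvk k z * norm (g z) \<le> Cb" using HvD(3)[OF gk] by blast
  obtain G where G: "\<And>x. x \<in> ball 0 1 \<Longrightarrow> (G has_field_derivative g x / (1 - of_real t * x)) (at x)"
    using Ces_prim[OF t VH_hol[OF gV]] by blast
  have P0: "G z - G 0 + z * fs z = 0" if z: "z \<in> ball 0 1" for z
  proof (cases "z = 0")
    case False
    have "(G z - G 0) / z = - fs z" using Ces_eq[OF G z False] Cg[of z] z by (simp add: f0_def)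
    thus ?thesis using False by (simp add: field_simps)
  qed simp
  have gform: "g z = - ((1 - of_real t * z) * (z * (fs z * ((1/2) * (inverse (1 - z) * -1))) + 1 * fs z))"
    if z: "z \<in> ball 0 1" for z
  proof -
    have nz: "norm z < 1" using z by simp
    have d0: "1 - of_real t * z \<noteq> 0" using den_props(3)[OF t] nz by simp
    have "((\<lambda>z. G z - G 0 + z * fs z) has_field_derivative
        g z / (1 - of_real t * z) - 0 + (z * (fs z * ((1/2) * (inverse (1 - z) * -1))) + 1 * fs z)) (at z)"
      by (rule DERIV_add[OF DERIV_diff[OF G[OF z] DERIV_const] DERIV_mult'[OF DERIV_ident fs_deriv[OF nz]]])
    from deriv_zero_open[OF P0 this z]
    have e: "g z / (1 - of_real t * z) = - (z * (fs z * ((1/2) * (inverse (1 - z) * -1))) + 1 * fs z)"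
      by (simp only: diff_zero eq_neg_iff_add_eq_0)
    have "g z = (g z / (1 - of_real t * z)) * (1 - of_real t * z)" using d0 by simp
    also have "\<dots> = - ((1 - of_real t * z) * (z * (fs z * ((1/2) * (inverse (1 - z) * -1))) + 1 * fs z))"
      unfolding e by (simp add: algebra_simps)
    finally show ?thesis .
  qed
  define \<epsilon> where "\<epsilon> = (1 - t) / (4 * (\<bar>Cb\<bar> + 1))"
  have \<epsilon>0: "0 < \<epsilon>" using t by (simp add: \<epsilon>_def)
  obtain L where L: "4 \<le> L" "L ^ k / exp (L / 2) < \<epsilon>" using big_L[OF \<epsilon>0] by blast
  define x where "x = exp (- L)"
  define r where "r = 1 - x"
  define s where "s = exp (- L / 2)"
  have x0: "0 < x" by (simp add: x_def)
  have eL: "16 \<le> exp L"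
  proof -
    have "exp 4 \<le> exp L" using L(1) by simp
    moreover have "exp (4::real) = exp 1 ^ 4" by (simp add: exp_of_nat_mult[symmetric])
    moreover have "(2::real) ^ 4 \<le> exp 1 ^ 4" using exp_ge_add_one_self[of 1] by (intro power_mono) auto
    ultimately show ?thesis by simp
  qed
  have x6: "x \<le> 1/16" using eL by (simp add: x_def exp_minus field_simps)
  have r: "0 < r" "r < 1" using x0 x6 by (auto simp: r_def)
  define z where "z = complex_of_real r"
  have nz: "norm z = r" using r by (simp add: z_def)
  have zb: "z \<in> ball 0 1" using nz r by simp
  have xe: "x < 1 / exp 1"
  proof -
    have "exp (- L) < exp (- 1)" using L(1) by simp
    thus ?thesis by (simp add: x_def exp_minus divide_inverse)
  qed
  have wv: "wvk k z = (1 / L) ^ k"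
  proof -
    have "\<not> norm z \<le> 1 - 1 / exp 1" using nz xe by (simp add: r_def)
    hence "wv z = 1 / (- ln (1 - norm z))" by (simp add: wv_def)
    also have "1 - norm z = x" using nz by (simp add: r_def)
    finally show ?thesis by (simp add: wvk_def x_def)
  qed
  have omz: "1 - z = complex_of_real x" by (simp add: z_def r_def)
  have fsz: "fs z = complex_of_real s"
  proof -
    have "fs z = exp ((1/2) * complex_of_real (ln x))" unfolding fs_def omz using x0 by (simp add: Ln_of_real)
    also have "(1/2) * complex_of_real (ln x) = complex_of_real (- L / 2)" by (simp add: x_def)
    also have "exp (complex_of_real (- L / 2)) = complex_of_real s" unfolding s_def by (rule exp_of_real)
    finally show ?thesis .
  qed
  have gz: "g z = complex_of_real (- ((1 - t * r) * (s * (1 - r / (2 * x)))))"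
    unfolding gform[OF zb] fsz omz using x0 by (simp add: z_def field_simps)
  have ng: "norm (g z) = (1 - t * r) * (s * \<bar>1 - r / (2 * x)\<bar>)"
  proof -
    have "0 \<le> 1 - t * r" using t r by (smt (verit) mult_le_one)
    moreover have "0 \<le> s" by (simp add: s_def)
    ultimately show ?thesis unfolding gz norm_of_real by (simp add: abs_mult)
  qed
  have a1: "1 / (4 * x) \<le> \<bar>1 - r / (2 * x)\<bar>"
  proof -
    have "1 / (4 * x) \<le> r / (2 * x) - 1" using x0 x6 by (simp add: r_def field_simps)
    thus ?thesis by linarith
  qed
  have a2: "1 - t \<le> 1 - t * r" using t r by (simp add: mult_left_le)
  have sx: "s / x = exp (L / 2)" by (simp add: s_def x_def exp_diff[symmetric])
  have "(1 - t) * exp (L / 2) / 4 = (1 - t) * (s * (1 / (4 * x)))" using x0 sx by (simp add: field_simps)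
  also have "\<dots> \<le> (1 - t * r) * (s * \<bar>1 - r / (2 * x)\<bar>)"
    using a1 a2 t x0 by (intro mult_mono) (auto simp: s_def)
  finally have gl: "(1 - t) * exp (L / 2) / 4 \<le> norm (g z)" using ng by simp
  have Lp: "0 < L" using L(1) by simp
  have "\<bar>Cb\<bar> + 1 < (1 / L) ^ k * ((1 - t) * exp (L / 2) / 4)"
  proof -
    have "L ^ k * (4 * (\<bar>Cb\<bar> + 1)) < (1 - t) * exp (L / 2)"
      using L(2) t by (simp add: \<epsilon>_def field_simps)
    thus ?thesis using Lp by (simp add: field_simps power_one_over)
  qed
  also have "\<dots> \<le> wvk k z * norm (g z)" unfolding wv using gl Lp by (intro mult_left_mono) auto
  also have "\<dots> \<le> Cb" using Cb zb by blast
  finally show False by linarith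
qed

theorem proposition3p5:
  fixes t :: real
  assumes "0 \<le> t" and "t < 1"
  shows "VH_cont_op (Ces t) \<and>
         VH_point_spectrum (Ces t) = {1 / of_nat (m + 1) | m :: nat. True} \<and>
         VH_spectrum (Ces t) = {1 / of_nat (m + 1) | m :: nat. True} \<union> {0}"
proof (intro conjI)
  show "VH_cont_op (Ces t)" by (rule Ces_cont[OF assms])
  show "VH_point_spectrum (Ces t) = {1 / of_nat (m + 1) | m :: nat. True}" by (rule point_spec[OF assms])
  show "VH_spectrum (Ces t) = {1 / of_nat (m + 1) | m :: nat. True} \<union> {0}"
  proof
    show "VH_spectrum (Ces t) \<subseteq> {1 / of_nat (m + 1) | m :: nat. True} \<union> {0}"
    proof
      fix l assume l: "l \<in> VH_spectrum (Ces t)"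
      show "l \<in> {1 / of_nat (m + 1) | m :: nat. True} \<union> {0}"
      proof (rule ccontr)
        assume "l \<notin> {1 / of_nat (m + 1) | m :: nat. True} \<union> {0}"
        hence "l \<notin> {1 / of_nat (m + 1) | m :: nat. True}" "l \<noteq> 0" by auto
        hence "l \<in> VH_resolvent (Ces t)" by (rule in_resolvent[OF assms])
        thus False using l by (simp add: VH_spectrum_def)
      qed
    qed
    show "{1 / of_nat (m + 1) | m :: nat. True} \<union> {0} \<subseteq> VH_spectrum (Ces t)"
      using eig_not_res[OF assms] zero_not_res[OF assms] by (auto simp: VH_spectrum_def)
  qed
qed

end
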